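(* Let $n\ge1$ and let $f\in\mathcal{C}^{2}(\mathbb{B}^{n})$ satisfy $\mathrm{Re}\big(f\overline{\Delta f}\big)\ge0$ in $\mathbb{B}^n$. Then for $p\ge2$ and $\alpha\ge2$, $$\int_{\mathbb{B}^{n}}(1-|z|^{2})^{\alpha}\,\Delta\big(|f(z)|^{p}\big)\,dV_{N}(z)<\infty$$ if and only if $f\in b_{\alpha-2,p}(\mathbb{B}^{n})$.
   Context: $\mathbb{B}^n$ is the open unit ball of $\mathbb{C}^n$, $d(z)=1-|z|$, $dV_N$ the normalized volume measure, $\Delta=4\sum_k\partial^2/\partial z_k\partial\overline{z}_k$. For $\nu>-1$ and $0<\mu<\infty$, the Bergman-type space $b_{\nu,\mu}(\mathbb{B}^n)$ consists of all continuous complex-valued $f$ on $\mathbb{B}^n$ with $\int_{\mathbb{B}^n}d(z)^{\nu}|f(z)|^{\mu}\,dV_N(z)<\infty$ (norm $|f(0)|+(\int_{\mathbb{B}^n}d^\nu|f|^\mu dV_N)^{1/\mu}$). *)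

theory Defs
  imports "HOL-Analysis.Analysis"
begin

text \<open>The open unit ball of C^n is ball 0 1 in complex^'n (Euclidean norm).
  Real partial derivatives are taken along the real basis Basis of complex^'n
  (the 2n real coordinate directions).\<close>

definition partial_dir :: "('a::euclidean_space \<Rightarrow> 'b::real_normed_vector) \<Rightarrow> 'a \<Rightarrow> 'a \<Rightarrow> 'b" where
  "partial_dir g v x = frechet_derivative g (at x) v"

definition C2_on :: "'a::euclidean_space set \<Rightarrow> ('a \<Rightarrow> 'b::real_normed_vector) \<Rightarrow> bool" where
  "C2_on S g \<longleftrightarrow> g differentiable_on S \<and>
     (\<forall>b\<in>Basis. (\<lambda>x. partial_dir g b x) differentiable_on S) \<and>
     (\<forall>b\<in>Basis. \<forall>c\<in>Basis. continuous_on S (\<lambda>x. partial_dir (\<lambda>y. partial_dir g b y) c x))"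

text \<open>Laplacian: sum of the pure second partials in all real directions;
  for complex^'n this is 4 \<Sum> d^2/dz_k dzbar_k.\<close>
definition laplacian :: "('a::euclidean_space \<Rightarrow> 'b::real_normed_vector) \<Rightarrow> 'a \<Rightarrow> 'b" where
  "laplacian g x = (\<Sum>b\<in>Basis. partial_dir (\<lambda>y. partial_dir g b y) b x)"

definition dVN :: "'a::euclidean_space measure" where
  "dVN = uniform_measure lborel (ball 0 1)"

definition b_space :: "real \<Rightarrow> real \<Rightarrow> (complex^'n \<Rightarrow> complex) set" where
  "b_space \<nu> \<mu> = {f. continuous_on (ball 0 1) f \<and>
     (\<integral>\<^sup>+ z. ennreal ((1 - norm z) powr \<nu> * norm (f z) powr \<mu>) \<partial>dVN) < \<infinity>}"

end

theory Submission
  imports Defs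
begin

lemma has_derivative_zero_small:
  fixes F :: "'a::real_normed_vector \<Rightarrow> real"
  assumes F0: "F x = 0"
    and sm: "\<And>e. e > 0 \<Longrightarrow> eventually (\<lambda>y. \<bar>F y\<bar> \<le> e * norm (y - x)) (at x)"
  shows "(F has_derivative (\<lambda>_. 0)) (at x)"
  unfolding has_derivative_at_within
proof (intro conjI)
  show "bounded_linear (\<lambda>_. 0::real)" by simp
  show "((\<lambda>y. (F y - F x - 0) /\<^sub>R norm (y - x)) \<longlongrightarrow> 0) (at x within UNIV)"
  proof (rule tendstoI)
    fix e :: real assume e: "e > 0"
    have "eventually (\<lambda>y. \<bar>F y\<bar> \<le> (e/2) * norm (y - x)) (at x)" using sm[of "e/2"] e by simp
    moreover have "eventually (\<lambda>y. y \<noteq> x) (at x)" by (simp add: eventually_at_filter)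
    ultimately show "eventually (\<lambda>y. dist ((F y - F x - 0) /\<^sub>R norm (y - x)) 0 < e) (at x within UNIV)"
    proof eventually_elim
      case (elim y)
      then have n: "norm (y - x) > 0" by simp
      have "\<bar>F y\<bar> / norm (y - x) \<le> e/2" using elim n by (simp add: divide_le_eq)
      moreover have "dist ((F y - F x - 0) /\<^sub>R norm (y - x)) 0 = \<bar>F y\<bar> / norm (y - x)"
        using n F0 by (simp add: dist_norm abs_mult divide_inverse mult.commute)
      ultimately show ?case using e by linarith
    qed
  qed
qed

definition pw :: "real \<Rightarrow> complex \<Rightarrow> real" where
  "pw p w = (if p = 2 then 1 else norm w powr (p - 2))"

definition Phi :: "real \<Rightarrow> complex \<Rightarrow> complex \<Rightarrow> real" where
  "Phi p w h = p * pw p w * Re (cnj w * h)"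

definition TT :: "real \<Rightarrow> complex \<Rightarrow> complex \<Rightarrow> complex \<Rightarrow> real" where
  "TT p w k h = (p - 2) * norm w powr (p - 4) * Re (cnj w * k) * Re (cnj w * h)"

definition dPhi :: "real \<Rightarrow> complex \<Rightarrow> complex \<Rightarrow> complex \<Rightarrow> complex \<Rightarrow> real" where
  "dPhi p w h k l = p * pw p w * (Re (cnj k * h) + Re (cnj w * l)) + p * TT p w k h"

lemma Re_cnj_mult: "Re (cnj w * h) = w \<bullet> h"
  by (simp add: inner_complex_def)

lemma abs_Re_cnj_le: "\<bar>Re (cnj w * h)\<bar> \<le> norm w * norm h"
  by (metis abs_Re_le_cmod complex_mod_cnj norm_mult)

lemma norm_deriv:
  fixes w :: "'a::real_inner"
  assumes "w \<noteq> 0"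
  shows "(norm has_derivative (\<lambda>h. (w \<bullet> h) / norm w)) (at w within S)"
proof -
  have "(norm has_derivative (\<lambda>h. h \<bullet> sgn w)) (at w)" by (rule has_derivative_norm[OF assms])
  moreover have "(\<lambda>h. h \<bullet> sgn w) = (\<lambda>h. (w \<bullet> h) / norm w)"
    by (auto simp: sgn_div_norm inner_commute divide_inverse mult.commute)
  ultimately show ?thesis by (simp add: has_derivative_at_withinI)
qed

lemma pw_nz: "w \<noteq> 0 \<Longrightarrow> pw p w = norm w powr (p - 2)"
  by (simp add: pw_def)

lemma pw_nonneg: "pw p w \<ge> 0" by (simp add: pw_def)

lemma g_deriv:
  assumes p: "p \<ge> 2"
  shows "((\<lambda>w. norm w powr p) has_derivative (\<lambda>k. Phi p w k)) (at w)"
proof (cases "w = 0")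
  case False
  have "((\<lambda>w. norm w powr p) has_derivative
      (\<lambda>h. (norm w powr p) * (0 * ln (norm w) + (w \<bullet> h / norm w) * p / norm w))) (at w)"
    using False by (auto intro!: derivative_eq_intros norm_deriv)
  moreover have "(\<lambda>h. (norm w powr p) * (0 * ln (norm w) + (w \<bullet> h / norm w) * p / norm w)) = (\<lambda>k. Phi p w k)"
  proof
    fix h
    have "norm w powr p = norm w powr (p - 2) * norm w ^ 2"
      using False by (simp add: powr_diff powr_realpow)
    then show "(norm w powr p) * (0 * ln (norm w) + (w \<bullet> h / norm w) * p / norm w) = Phi p w h"
      using False by (simp add: Phi_def pw_nz inner_complex_def power2_eq_square field_simps)
  qed
  ultimately show ?thesis by simp
next
  case True
  have "((\<lambda>w. norm w powr p) has_derivative (\<lambda>_. 0)) (at w)"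
  proof (rule has_derivative_zero_small)
    show "norm w powr p = 0" using True by simp
    fix e :: real assume e: "e > 0"
    have "((\<lambda>y. norm y powr (p - 1)) \<longlongrightarrow> 0) (at w)"
      using True p by (intro tendsto_zero_powrI) (auto intro!: tendsto_eq_intros)
    then have "eventually (\<lambda>y. norm y powr (p - 1) < e) (at w)"
      using e by (rule order_tendstoD)
    then show "eventually (\<lambda>y. \<bar>norm y powr p\<bar> \<le> e * norm (y - w)) (at w)"
    proof eventually_elim
      case (elim y)
      show ?case
      proof (cases "y = 0")
        case True then show ?thesis using e by simp
      next
        case False
        have "norm y powr p = norm y powr (p - 1) * norm y"
          using False by (simp add: powr_diff)
        also have "\<dots> \<le> e * norm y" using elim by (intro mult_right_mono) auto
        finally show ?thesis using True by simp
      qed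
    qed
  qed
  moreover have "(\<lambda>k. Phi p w k) = (\<lambda>_. 0)" using True by (auto simp: Phi_def)
  ultimately show ?thesis by simp
qed

lemma norm_fst_deriv:
  assumes "w \<noteq> (0::complex)"
  shows "((\<lambda>x::complex\<times>complex. norm (fst x)) has_derivative (\<lambda>y. (w \<bullet> fst y) / norm w)) (at (w,h))"
proof -
  have "(fst has_derivative fst) (at (w,h))" by (rule has_derivative_fst[OF has_derivative_ident])
  moreover have "(norm has_derivative (\<lambda>k. (w \<bullet> k) / norm w)) (at (fst (w,h)))"
    using norm_deriv[OF assms, of UNIV] by simp
  ultimately show ?thesis by (rule has_derivative_compose)
qed

lemma Phi_deriv:
  assumes p: "p \<ge> 2"
  shows "((\<lambda>x. Phi p (fst x) (snd x)) has_derivative (\<lambda>y. dPhi p w h (fst y) (snd y))) (at (w,h))"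
proof (cases "w = 0")
  case False
  let ?S = "{x::complex\<times>complex. fst x \<noteq> 0}"
  have opn: "open ?S" by (intro open_Collect_neq continuous_intros)
  have n2: "norm w powr 2 = norm w * norm w"
    using False by (simp add: powr_numeral power2_eq_square)
  have e: "norm w powr (p - 2) = norm w powr (p - 4) * (norm w * norm w)"
    unfolding n2[symmetric] powr_add[symmetric] by simp
  have A0: "((\<lambda>x. norm (fst x) powr (p - 2)) has_derivative
      (\<lambda>y. (norm (fst (w,h)) powr (p - 2)) * (0 * ln (norm (fst (w,h))) + ((w \<bullet> fst y) / norm w) * (p - 2) / norm (fst (w,h))))) (at (w,h))"
    by (rule has_derivative_powr[OF norm_fst_deriv[OF False] has_derivative_const]) (use False in auto)
  have A: "((\<lambda>x. norm (fst x) powr (p - 2)) has_derivative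
      (\<lambda>y. (p - 2) * norm w powr (p - 4) * (w \<bullet> fst y))) (at (w,h))"
  proof -
    have "(\<lambda>y::complex\<times>complex. (norm (fst (w,h)) powr (p - 2)) * (0 * ln (norm (fst (w,h))) + ((w \<bullet> fst y) / norm w) * (p - 2) / norm (fst (w,h))))
       = (\<lambda>y. (p - 2) * norm w powr (p - 4) * (w \<bullet> fst y))"
    proof (rule ext)
      fix y :: "complex \<times> complex"
      have nz: "norm w \<noteq> 0" using False by simp
      show "(norm (fst (w,h)) powr (p - 2)) * (0 * ln (norm (fst (w,h))) + ((w \<bullet> fst y) / norm w) * (p - 2) / norm (fst (w,h)))
          = (p - 2) * norm w powr (p - 4) * (w \<bullet> fst y)"
        unfolding fst_conv e using nz by (simp add: field_simps)
    qed
    with A0 show ?thesis by simp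
  qed
  have B: "((\<lambda>x. Re (cnj (fst x) * snd x)) has_derivative (\<lambda>y. Re (cnj (fst y) * h) + Re (cnj w * snd y))) (at (w,h))"
    by (auto intro!: derivative_eq_intros simp: algebra_simps)
  have C: "((\<lambda>x. p * (norm (fst x) powr (p - 2) * Re (cnj (fst x) * snd x))) has_derivative
      (\<lambda>y. p * (norm (fst (w,h)) powr (p - 2) * (Re (cnj (fst y) * h) + Re (cnj w * snd y)) +
          (p - 2) * norm w powr (p - 4) * (w \<bullet> fst y) * Re (cnj (fst (w,h)) * snd (w,h))))) (at (w,h))"
    by (intro has_derivative_mult_right has_derivative_mult A B)
  have "(\<lambda>y. p * (norm (fst (w,h)) powr (p - 2) * (Re (cnj (fst y) * h) + Re (cnj w * snd y)) +
          (p - 2) * norm w powr (p - 4) * (w \<bullet> fst y) * Re (cnj (fst (w,h)) * snd (w,h))))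
      = (\<lambda>y. dPhi p w h (fst y) (snd y))"
    unfolding dPhi_def TT_def pw_nz[OF False] fst_conv snd_conv by (auto simp: Re_cnj_mult[symmetric] algebra_simps)
  with C have "((\<lambda>x. p * (norm (fst x) powr (p - 2) * Re (cnj (fst x) * snd x))) has_derivative
      (\<lambda>y. dPhi p w h (fst y) (snd y))) (at (w,h))" by simp
  note d = this
  show ?thesis
    by (rule has_derivative_transform_within_open[OF d opn]) (use False in \<open>auto simp: Phi_def pw_nz\<close>)
next
  case True
  show ?thesis
  proof (cases "p = 2")
    case True
    have "((\<lambda>x. 2 * Re (cnj (fst x) * snd x)) has_derivative
        (\<lambda>y. 2 * Re (cnj (fst y) * h + cnj w * snd y))) (at (w,h))"
      by (auto intro!: derivative_eq_intros simp: algebra_simps)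
    moreover have "(\<lambda>y. 2 * Re (cnj (fst y) * h + cnj w * snd y)) = (\<lambda>y. dPhi p w h (fst y) (snd y))"
      using True by (auto simp: dPhi_def TT_def pw_def algebra_simps)
    moreover have "(\<lambda>x. 2 * Re (cnj (fst x) * snd x)) = (\<lambda>x. Phi p (fst x) (snd x))"
      using True by (auto simp: Phi_def pw_def)
    ultimately show ?thesis by simp
  next
    case False
    with p have p2: "p > 2" by simp
    have "((\<lambda>x. Phi p (fst x) (snd x)) has_derivative (\<lambda>_. 0)) (at (w,h))"
    proof (rule has_derivative_zero_small)
      show "Phi p (fst (w, h)) (snd (w, h)) = 0" using True by (simp add: Phi_def)
      fix e :: real assume e: "e > 0"
      have "((\<lambda>y::complex\<times>complex. p * norm (fst y) powr (p - 2) * norm (snd y)) \<longlongrightarrow> p * 0 * norm h) (at (w,h))"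
        using True p2
        by (intro tendsto_mult tendsto_const tendsto_zero_powrI) (auto intro!: tendsto_eq_intros)
      then have "eventually (\<lambda>y::complex\<times>complex. p * norm (fst y) powr (p - 2) * norm (snd y) < e) (at (w,h))"
        using e by (intro order_tendstoD) auto
      then show "eventually (\<lambda>y. \<bar>Phi p (fst y) (snd y)\<bar> \<le> e * norm (y - (w,h))) (at (w,h))"
      proof eventually_elim
        case (elim y)
        have "\<bar>Phi p (fst y) (snd y)\<bar> = p * norm (fst y) powr (p - 2) * \<bar>Re (cnj (fst y) * snd y)\<bar>"
          using False p by (simp add: Phi_def pw_def abs_mult)
        also have "\<dots> \<le> p * norm (fst y) powr (p - 2) * (norm (fst y) * norm (snd y))"
          using p by (intro mult_left_mono abs_Re_cnj_le) auto
        also have "\<dots> = (p * norm (fst y) powr (p - 2) * norm (snd y)) * norm (fst y)" by simp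
        also have "\<dots> \<le> e * norm (fst y)" using elim by (intro mult_right_mono) auto
        also have "\<dots> \<le> e * norm (y - (w,h))"
          using e True norm_fst_le[of "fst (y - (w,h))" "snd (y - (w,h))"] by (intro mult_left_mono) (cases y, auto)
        finally show ?case .
      qed
    qed
    moreover have "(\<lambda>y. dPhi p w h (fst y) (snd y)) = (\<lambda>_. 0)"
      using True False by (auto simp: dPhi_def TT_def pw_def)
    ultimately show ?thesis by simp
  qed
qed


lemma TT_bound:
  assumes p: "p \<ge> 2"
  shows "\<bar>TT p w k h\<bar> \<le> (p - 2) * norm w powr (p - 2) * norm k * norm h"
proof (cases "w = 0")
  case True then show ?thesis by (simp add: TT_def)
next
  case False
  have n2: "norm w powr 2 = norm w * norm w"
    using False by (simp add: powr_numeral power2_eq_square)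
  have e: "norm w powr (p - 2) = norm w powr (p - 4) * (norm w * norm w)"
    unfolding n2[symmetric] powr_add[symmetric] by simp
  have "\<bar>TT p w k h\<bar> = (p - 2) * norm w powr (p - 4) * (\<bar>Re (cnj w * k)\<bar> * \<bar>Re (cnj w * h)\<bar>)"
    using p by (simp add: TT_def abs_mult)
  also have "\<dots> \<le> (p - 2) * norm w powr (p - 4) * ((norm w * norm k) * (norm w * norm h))"
    using p by (intro mult_left_mono mult_mono abs_Re_cnj_le) auto
  also have "\<dots> = (p - 2) * norm w powr (p - 2) * norm k * norm h"
    unfolding e by (simp add: algebra_simps)
  finally show ?thesis .
qed

lemma TT_nonneg_diag: "p \<ge> 2 \<Longrightarrow> TT p w k k \<ge> 0"
  by (simp add: TT_def mult.assoc)

lemma cont_TT: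
  fixes a b c :: "'a::topological_space \<Rightarrow> complex"
  assumes p: "p \<ge> 2"
    and ca: "continuous_on S a" and cb: "continuous_on S b" and cc: "continuous_on S c"
  shows "continuous_on S (\<lambda>x. TT p (a x) (b x) (c x))"
  unfolding continuous_on_def
proof
  fix x assume x: "x \<in> S"
  have ta: "(a \<longlongrightarrow> a x) (at x within S)" and tb: "(b \<longlongrightarrow> b x) (at x within S)"
    and tc: "(c \<longlongrightarrow> c x) (at x within S)"
    using ca cb cc x by (auto simp: continuous_on_def)
  show "((\<lambda>x. TT p (a x) (b x) (c x)) \<longlongrightarrow> TT p (a x) (b x) (c x)) (at x within S)"
  proof (cases "a x = 0")
    case False
    show ?thesis unfolding TT_def
      by (intro tendsto_intros ta tb tc tendsto_powr) (use False in auto)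
  next
    case True
    show ?thesis
    proof (cases "p = 2")
      case True then show ?thesis by (simp add: TT_def)
    next
      case False
      with p have p2: "p > 2" by simp
      have "((\<lambda>y. (p - 2) * norm (a y) powr (p - 2) * norm (b y) * norm (c y)) \<longlongrightarrow> (p - 2) * 0 * norm (b x) * norm (c x)) (at x within S)"
        using True p2 by (intro tendsto_intros ta tb tc tendsto_zero_powrI) (auto intro!: tendsto_eq_intros ta)
      then have lim0: "((\<lambda>y. (p - 2) * norm (a y) powr (p - 2) * norm (b y) * norm (c y)) \<longlongrightarrow> 0) (at x within S)"
        by simp
      have bd: "\<forall>y. norm (TT p (a y) (b y) (c y)) \<le> (p - 2) * norm (a y) powr (p - 2) * norm (b y) * norm (c y)"
        using TT_bound[OF p] by (simp only: real_norm_def) blast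
      have "((\<lambda>y. TT p (a y) (b y) (c y)) \<longlongrightarrow> 0) (at x within S)"
        by (rule Lim_null_comparison[OF always_eventually[OF bd] lim0])
      then show ?thesis using True by (simp add: TT_def)
    qed
  qed
qed

lemma cont_pw:
  fixes a :: "'a::topological_space \<Rightarrow> complex"
  assumes p: "p \<ge> 2" and ca: "continuous_on S a"
  shows "continuous_on S (\<lambda>x. pw p (a x))"
proof (cases "p = 2")
  case True then show ?thesis by (simp add: pw_def)
next
  case False
  with p have "continuous_on S (\<lambda>x. norm (a x) powr (p - 2))"
    by (intro continuous_on_powr' continuous_intros ca) auto
  then show ?thesis using False by (simp add: pw_def)
qed

lemma cont_dPhi:
  fixes a b c d :: "'a::topological_space \<Rightarrow> complex"
  assumes p: "p \<ge> 2" and "continuous_on S a" "continuous_on S b" "continuous_on S c" "continuous_on S d"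
  shows "continuous_on S (\<lambda>x. dPhi p (a x) (b x) (c x) (d x))"
  unfolding dPhi_def
  by (intro continuous_intros cont_pw cont_TT assms)

lemma cont_Phi:
  fixes a b :: "'a::topological_space \<Rightarrow> complex"
  assumes p: "p \<ge> 2" and "continuous_on S a" "continuous_on S b"
  shows "continuous_on S (\<lambda>x. Phi p (a x) (b x))"
  unfolding Phi_def
  by (intro continuous_intros cont_pw assms)


locale ctx =
  fixes f :: "complex^'n \<Rightarrow> complex" and p :: real
  assumes C2: "C2_on (ball 0 1) f" and p2: "p \<ge> 2"
begin

abbreviation "B \<equiv> ball (0::complex^'n) 1"
definition "fb b = (\<lambda>y. partial_dir f b y)"
definition "fbb b = (\<lambda>y. partial_dir (\<lambda>y. partial_dir f b y) b y)"
definition "u = (\<lambda>w. norm (f w) powr p)"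
definition "Db b = (\<lambda>y. Phi p (f y) (fb b y))"
definition "Sb b = (\<lambda>y. dPhi p (f y) (fb b y) (fb b y) (fbb b y))"
definition "L = (\<lambda>y. \<Sum>b\<in>Basis. Sb b y)"

lemma f_diff: "y \<in> B \<Longrightarrow> (f has_derivative frechet_derivative f (at y)) (at y)"
  using C2 unfolding C2_on_def
  by (meson differentiable_on_eq_differentiable_at frechet_derivative_works open_ball)

lemma fb_diff: "b \<in> Basis \<Longrightarrow> y \<in> B \<Longrightarrow> (fb b has_derivative frechet_derivative (fb b) (at y)) (at y)"
  using C2 unfolding C2_on_def fb_def
  by (meson differentiable_on_eq_differentiable_at frechet_derivative_works open_ball)

lemma cont_f: "continuous_on B f"
  using C2 unfolding C2_on_def by (simp add: differentiable_imp_continuous_on)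

lemma cont_fb: "b \<in> Basis \<Longrightarrow> continuous_on B (fb b)"
  using C2 unfolding C2_on_def fb_def by (simp add: differentiable_imp_continuous_on)

lemma cont_fbb: "b \<in> Basis \<Longrightarrow> continuous_on B (fbb b)"
  using C2 unfolding C2_on_def fbb_def by simp

lemma u_deriv: "y \<in> B \<Longrightarrow> (u has_derivative (\<lambda>v. Phi p (f y) (frechet_derivative f (at y) v))) (at y)"
  unfolding u_def using has_derivative_compose[OF f_diff g_deriv[OF p2]] by simp

lemma partial_u: assumes "y \<in> B" shows "partial_dir u b y = Db b y"
proof -
  from fun_cong[OF frechet_derivative_at[OF u_deriv[OF assms]], of b]
  show ?thesis by (simp add: partial_dir_def Db_def fb_def)
qed

lemma Db_deriv:
  assumes b: "b \<in> Basis" and z: "z \<in> B"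
  shows "(Db b has_derivative (\<lambda>v. dPhi p (f z) (fb b z) (frechet_derivative f (at z) v) (frechet_derivative (fb b) (at z) v))) (at z)"
proof -
  have P: "((\<lambda>y. (f y, fb b y)) has_derivative (\<lambda>v. (frechet_derivative f (at z) v, frechet_derivative (fb b) (at z) v))) (at z)"
    by (intro has_derivative_Pair f_diff fb_diff b z)
  from has_derivative_compose[OF P Phi_deriv[OF p2]]
  show ?thesis by (simp add: Db_def)
qed

lemma partial_Db: assumes "b \<in> Basis" "z \<in> B" shows "partial_dir (Db b) b z = Sb b z"
proof -
  from fun_cong[OF frechet_derivative_at[OF Db_deriv[OF assms]], of b]
  show ?thesis by (simp add: partial_dir_def Sb_def fb_def fbb_def)
qed

lemma Db_dir:
  assumes b: "b \<in> Basis" and z: "z \<in> B"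
  shows "((\<lambda>t. Db b (z + t *\<^sub>R b)) has_real_derivative Sb b z) (at 0)"
proof -
  have "((\<lambda>t::real. z + t *\<^sub>R b) has_derivative (\<lambda>t. t *\<^sub>R b)) (at 0)"
    by (auto intro!: derivative_eq_intros)
  from has_derivative_compose[OF this, of "Db b"] Db_deriv[OF b z]
  have "((\<lambda>t. Db b (z + t *\<^sub>R b)) has_derivative (\<lambda>t. frechet_derivative (Db b) (at z) (t *\<^sub>R b))) (at 0)"
    using frechet_derivative_at[OF Db_deriv[OF b z]] by simp
  moreover have "(\<lambda>t. frechet_derivative (Db b) (at z) (t *\<^sub>R b)) = (\<lambda>t. t * Sb b z)"
  proof
    fix t :: real
    have "linear (frechet_derivative (Db b) (at z))"
      using Db_deriv[OF b z] frechet_derivative_at[OF Db_deriv[OF b z]]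
      by (metis has_derivative_linear)
    then have "frechet_derivative (Db b) (at z) (t *\<^sub>R b) = t * frechet_derivative (Db b) (at z) b"
      by (simp add: linear_scale)
    then show "frechet_derivative (Db b) (at z) (t *\<^sub>R b) = t * Sb b z"
      using partial_Db[OF b z] by (simp add: partial_dir_def)
  qed
  ultimately show ?thesis by (simp add: has_field_derivative_def mult_commute_abs)
qed

lemma u_dir:
  assumes z: "z \<in> B"
  shows "((\<lambda>t. u (z + t *\<^sub>R b)) has_real_derivative Db b z) (at 0)"
proof -
  have "((\<lambda>t::real. z + t *\<^sub>R b) has_derivative (\<lambda>t. t *\<^sub>R b)) (at 0)"
    by (auto intro!: derivative_eq_intros)
  from has_derivative_compose[OF this, of u] u_deriv[OF z]
  have "((\<lambda>t. u (z + t *\<^sub>R b)) has_derivative (\<lambda>t. frechet_derivative u (at z) (t *\<^sub>R b))) (at 0)"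
    using frechet_derivative_at[OF u_deriv[OF z]] by simp
  moreover have "(\<lambda>t. frechet_derivative u (at z) (t *\<^sub>R b)) = (\<lambda>t. t * Db b z)"
  proof
    fix t :: real
    have "linear (frechet_derivative u (at z))"
      using u_deriv[OF z] frechet_derivative_at[OF u_deriv[OF z]]
      by (metis has_derivative_linear)
    then have "frechet_derivative u (at z) (t *\<^sub>R b) = t * frechet_derivative u (at z) b"
      by (simp add: linear_scale)
    then show "frechet_derivative u (at z) (t *\<^sub>R b) = t * Db b z"
      using partial_u[OF z] by (simp add: partial_dir_def)
  qed
  ultimately show ?thesis by (simp add: has_field_derivative_def mult_commute_abs)
qed

lemma lap_u: "z \<in> B \<Longrightarrow> laplacian (\<lambda>w. norm (f w) powr p) z = L z"
proof -
  assume z: "z \<in> B"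
  have "laplacian u z = (\<Sum>b\<in>Basis. partial_dir (Db b) b z)"
    unfolding laplacian_def
  proof (intro sum.cong refl)
    fix b :: "complex^'n" assume b: "b \<in> Basis"
    have "frechet_derivative (\<lambda>y. partial_dir u b y) (at z) = frechet_derivative (Db b) (at z)"
    proof -
      have "((\<lambda>y. partial_dir u b y) has_derivative frechet_derivative (Db b) (at z)) (at z)"
        by (rule has_derivative_transform_within_open[OF frechet_derivative_works[THEN iffD1] open_ball z])
           (use Db_deriv[OF b z] partial_u in \<open>auto simp: differentiable_def\<close>)
      then show ?thesis by (metis frechet_derivative_at)
    qed
    then show "partial_dir (\<lambda>y. partial_dir u b y) b z = partial_dir (Db b) b z"
      by (simp add: partial_dir_def)
  qed
  also have "\<dots> = L z" using partial_Db z by (simp add: L_def)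
  finally show ?thesis by (simp add: u_def)
qed

lemma cont_u: "continuous_on B u"
  unfolding u_def using p2 by (intro continuous_on_powr' continuous_intros cont_f) auto

lemma cont_Db: "b \<in> Basis \<Longrightarrow> continuous_on B (Db b)"
  unfolding Db_def by (intro cont_Phi p2 cont_f cont_fb)

lemma cont_Sb: "b \<in> Basis \<Longrightarrow> continuous_on B (Sb b)"
  unfolding Sb_def by (intro cont_dPhi p2 cont_f cont_fb cont_fbb)

lemma cont_L: "continuous_on B L"
  unfolding L_def by (intro continuous_on_sum cont_Sb)

lemma u_nonneg: "u y \<ge> 0" by (simp add: u_def)

lemma L_nonneg:
  assumes hyp: "\<forall>z\<in>B. Re (f z * cnj (laplacian f z)) \<ge> 0" and z: "z \<in> B"
  shows "L z \<ge> 0"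
proof -
  have "L z = p * pw p (f z) * (\<Sum>b\<in>Basis. Re (cnj (fb b z) * fb b z)) + p * pw p (f z) * Re (cnj (f z) * laplacian f z)
           + p * (\<Sum>b\<in>Basis. TT p (f z) (fb b z) (fb b z))"
    by (simp add: L_def Sb_def dPhi_def laplacian_def fbb_def fb_def sum.distrib sum_distrib_left
        algebra_simps Re_sum[symmetric] sum_divide_distrib)
  moreover have "Re (cnj (f z) * laplacian f z) = Re (f z * cnj (laplacian f z))"
    by (simp add: algebra_simps)
  moreover have "(\<Sum>b\<in>Basis. Re (cnj (fb b z) * fb b z)) \<ge> 0"
    by (intro sum_nonneg) (simp add: Re_cnj_mult)
  moreover have "(\<Sum>b\<in>Basis. TT p (f z) (fb b z) (fb b z)) \<ge> 0"
    by (intro sum_nonneg TT_nonneg_diag p2)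
  ultimately show ?thesis using hyp z p2 pw_nonneg[of p "f z"]
    by (simp add: add_nonneg_nonneg)
qed

end

lemma dir_W:
  fixes s0 c \<alpha> :: real
  assumes s0: "s0 > 0"
  shows "((\<lambda>t. (max 0 (s0 - 2*c*t - t*t)) powr \<alpha>) has_real_derivative (-2*\<alpha>*c* s0 powr (\<alpha> - 1))) (at 0)"
proof -
  have d: "((\<lambda>t. (s0 - 2*c*t - t*t) powr \<alpha>) has_real_derivative
      ((s0 - 2*c*0 - 0*0) powr \<alpha>) * (0 * ln (s0 - 2*c*0 - 0*0) + (-2*c - 2*0) * \<alpha> / (s0 - 2*c*0 - 0*0))) (at 0)"
    by (rule DERIV_powr) (use s0 in \<open>auto intro!: derivative_eq_intros\<close>)
  have "((s0 - 2*c*0 - 0*0) powr \<alpha>) * (0 * ln (s0 - 2*c*0 - 0*0) + (-2*c - 2*0) * \<alpha> / (s0 - 2*c*0 - 0*0))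
      = -2*\<alpha>*c* s0 powr (\<alpha> - 1)"
    using s0 by (simp add: powr_diff field_simps)
  with d have d': "((\<lambda>t. (s0 - 2*c*t - t*t) powr \<alpha>) has_real_derivative (-2*\<alpha>*c* s0 powr (\<alpha> - 1))) (at 0)" by simp
  show ?thesis
    by (rule has_field_derivative_transform_within_open[OF d', of "{t. s0 - 2*c*t - t*t > 0}"])
       (use s0 in \<open>auto intro!: open_Collect_less continuous_intros\<close>)
qed

lemma dir_Wb:
  fixes s0 c \<alpha> :: real
  assumes s0: "s0 > 0"
  shows "((\<lambda>t. -2*\<alpha>*(c + t) * (max 0 (s0 - 2*c*t - t*t)) powr (\<alpha> - 1)) has_real_derivative
     (-2*\<alpha>* s0 powr (\<alpha> - 1) + 4*\<alpha>*(\<alpha> - 1)*c^2 * s0 powr (\<alpha> - 2))) (at 0)"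
proof -
  have d1: "((\<lambda>t. (max 0 (s0 - 2*c*t - t*t)) powr (\<alpha> - 1)) has_real_derivative (-2*(\<alpha> - 1)*c* s0 powr (\<alpha> - 1 - 1))) (at 0)"
    by (rule dir_W[OF s0])
  have d2: "((\<lambda>t. -2*\<alpha>*(c + t)) has_real_derivative (-2*\<alpha>)) (at 0)"
    by (auto intro!: derivative_eq_intros)
  show ?thesis
    by (rule DERIV_cong[OF DERIV_mult[OF d2 d1]]) (use s0 in \<open>simp add: power2_eq_square algebra_simps\<close>)

qed

lemma norm_add_dir:
  fixes z b :: "'a::euclidean_space"
  assumes b: "b \<in> Basis"
  shows "(norm (z + t *\<^sub>R b))\<^sup>2 = (norm z)\<^sup>2 + 2 * (z \<bullet> b) * t + t * t"
    and "(z + t *\<^sub>R b) \<bullet> b = z \<bullet> b + t"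
  using b by (auto simp: power2_norm_eq_inner inner_add_left inner_add_right inner_commute algebra_simps)

lemma finite_sphere_line:
  fixes z b :: "'a::euclidean_space"
  assumes b: "b \<in> Basis"
  shows "finite {t. norm (z + t *\<^sub>R b) = r}"
proof -
  let ?c = "z \<bullet> b" and ?d = "(norm z)\<^sup>2 - r^2"
  have "{t. norm (z + t *\<^sub>R b) = r} \<subseteq> {- ?c + sqrt (?c^2 - ?d), - ?c - sqrt (?c^2 - ?d)}"
  proof
    fix t assume "t \<in> {t. norm (z + t *\<^sub>R b) = r}"
    then have "(norm (z + t *\<^sub>R b))\<^sup>2 = r^2" by simp
    then have "(t + ?c)^2 = ?c^2 - ?d" using norm_add_dir(1)[OF b, of z t]
      by (simp add: power2_eq_square algebra_simps)
    then have "sqrt ((t + ?c)^2) = sqrt (?c^2 - ?d)" by simp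
    then have "\<bar>t + ?c\<bar> = sqrt (?c^2 - ?d)" by simp
    then have "t = - ?c + sqrt (?c^2 - ?d) \<or> t = - ?c - sqrt (?c^2 - ?d)" by linarith
    then show "t \<in> {- ?c + sqrt (?c^2 - ?d), - ?c - sqrt (?c^2 - ?d)}" by blast
  qed
  then show ?thesis by (rule finite_subset) simp
qed

context ctx
begin

definition "sr r y = r^2 - (norm y)^2"
definition "W \<alpha> r y = (max 0 (sr r y)) powr \<alpha>"
definition "Wb \<alpha> r b y = -2*\<alpha>*(y \<bullet> b) * (max 0 (sr r y)) powr (\<alpha> - 1)"
definition "Wbb \<alpha> r b y = -2*\<alpha>* (sr r y) powr (\<alpha> - 1) + 4*\<alpha>*(\<alpha> - 1)*(y \<bullet> b)^2 * (sr r y) powr (\<alpha> - 2)"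
definition "G \<alpha> r b y = W \<alpha> r y * Db b y - u y * Wb \<alpha> r b y"
definition "dG \<alpha> r b y = indicator (ball 0 r) y * (W \<alpha> r y * Sb b y - u y * Wbb \<alpha> r b y)"

lemma sr_dir: "b \<in> Basis \<Longrightarrow> sr r (z + t *\<^sub>R b) = sr r z - 2 * (z \<bullet> b) * t - t * t"
  using norm_add_dir(1)[of b z t] by (simp add: sr_def)

lemma G_dir0:
  assumes b: "b \<in> Basis" and r: "r < 1" and r0: "0 \<le> r" and z: "norm z \<noteq> r"
  shows "((\<lambda>t. G \<alpha> r b (z + t *\<^sub>R b)) has_real_derivative dG \<alpha> r b z) (at 0)"
proof (cases "norm z < r")
  case True
  have zB: "z \<in> B" using True r by simp
  have s0: "sr r z > 0" using power_strict_mono[OF True norm_ge_zero, of 2] unfolding sr_def by linarith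
  have dW: "((\<lambda>t. W \<alpha> r (z + t *\<^sub>R b)) has_real_derivative Wb \<alpha> r b z) (at 0)"
    using dir_W[OF s0, of "z \<bullet> b" \<alpha>] s0 unfolding W_def Wb_def sr_dir[OF b]
    by (simp add: mult.assoc)
  have dWb: "((\<lambda>t. Wb \<alpha> r b (z + t *\<^sub>R b)) has_real_derivative Wbb \<alpha> r b z) (at 0)"
    using dir_Wb[OF s0, of \<alpha> "z \<bullet> b"] s0 unfolding Wb_def Wbb_def sr_dir[OF b] norm_add_dir(2)[OF b]
    by simp
  have "((\<lambda>t. W \<alpha> r (z + t *\<^sub>R b) * Db b (z + t *\<^sub>R b) - u (z + t *\<^sub>R b) * Wb \<alpha> r b (z + t *\<^sub>R b))
      has_real_derivative (W \<alpha> r (z + 0 *\<^sub>R b) * Sb b z + Wb \<alpha> r b z * Db b (z + 0 *\<^sub>R b)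
         - (u (z + 0 *\<^sub>R b) * Wbb \<alpha> r b z + Db b z * Wb \<alpha> r b (z + 0 *\<^sub>R b)))) (at 0)"
    by (intro DERIV_diff DERIV_mult' dW dWb Db_dir u_dir b zB)
  then show ?thesis using True by (simp add: G_def dG_def algebra_simps)
next
  case False
  with z have zr: "norm z > r" by simp
  have D: "((\<lambda>t. 0::real) has_real_derivative 0) (at 0)" by simp
  have opn: "open {t::real. norm (z + t *\<^sub>R b) > r}"
    by (intro open_Collect_less continuous_intros)
  have mem: "(0::real) \<in> {t::real. norm (z + t *\<^sub>R b) > r}" using zr by simp
  have eqs: "0 = G \<alpha> r b (z + t *\<^sub>R b)" if "t \<in> {t::real. norm (z + t *\<^sub>R b) > r}" for t
  proof -
    have "r < norm (z + t *\<^sub>R b)" using that by simp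
    from power_strict_mono[OF this r0, of 2]
    have "sr r (z + t *\<^sub>R b) \<le> 0" unfolding sr_def by linarith
    then show ?thesis by (simp add: G_def W_def Wb_def)
  qed
  have "((\<lambda>t. G \<alpha> r b (z + t *\<^sub>R b)) has_real_derivative 0) (at 0)"
    by (rule has_field_derivative_transform_within_open[OF D opn mem eqs])
  then show ?thesis using zr by (simp add: dG_def)
qed

lemma G_dir:
  assumes b: "b \<in> Basis" and r: "r < 1" and r0: "0 \<le> r" and z: "norm (z + t0 *\<^sub>R b) \<noteq> r"
  shows "((\<lambda>t. G \<alpha> r b (z + t *\<^sub>R b)) has_real_derivative dG \<alpha> r b (z + t0 *\<^sub>R b)) (at t0)"
proof -
  have "((\<lambda>t. G \<alpha> r b ((z + t0 *\<^sub>R b) + t *\<^sub>R b)) has_real_derivative dG \<alpha> r b (z + t0 *\<^sub>R b)) (at 0)"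
    by (rule G_dir0[OF b r r0 z])
  moreover have e: "\<And>t. (z + t0 *\<^sub>R b) + t *\<^sub>R b = z + (t + t0) *\<^sub>R b" by (simp add: algebra_simps)
  ultimately have "((\<lambda>t. G \<alpha> r b (z + (t + t0) *\<^sub>R b)) has_real_derivative dG \<alpha> r b (z + t0 *\<^sub>R b)) (at 0)"
    by simp
  then show ?thesis using DERIV_shift[of "\<lambda>t. G \<alpha> r b (z + t *\<^sub>R b)" _ 0 t0] by simp
qed

end

lemma sphere_null: "sphere (c::'a::euclidean_space) r \<in> null_sets lborel"
  using negligible_sphere[of c r]
  by (auto simp: null_sets_completion_iff negligible_iff_null_sets negligible_convex_frontier)

lemma pw_le1: "0 \<le> x \<Longrightarrow> x \<le> 1 \<Longrightarrow> 0 \<le> a \<Longrightarrow> x powr a \<le> (1::real)"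
  by (intro powr_le1) auto

context ctx
begin

lemma G_zero: "norm y > r \<Longrightarrow> r \<ge> 0 \<Longrightarrow> G \<alpha> r b y = 0"
proof -
  assume "norm y > r" "r \<ge> 0"
  then have "sr r y \<le> 0" unfolding sr_def using power_strict_mono[of r "norm y" 2] by linarith
  then show ?thesis by (simp add: G_def W_def Wb_def)
qed

lemma cont_G:
  assumes b: "b \<in> Basis" and r: "0 \<le> r" "r < 1" and a: "\<alpha> \<ge> 2"
  shows "continuous_on UNIV (G \<alpha> r b)"
proof -
  have cW: "continuous_on UNIV (W \<alpha> r)" unfolding W_def sr_def
    using a by (intro continuous_on_powr' continuous_intros) auto
  have cWb: "continuous_on UNIV (Wb \<alpha> r b)" unfolding Wb_def sr_def
    using a by (intro continuous_on_powr' continuous_intros) auto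
  have c1: "continuous_on B (G \<alpha> r b)" unfolding G_def
    by (intro continuous_intros cont_Db cont_u b continuous_on_subset[OF cW] continuous_on_subset[OF cWb]) auto
  have c2: "continuous_on {y. norm y > r} (G \<alpha> r b)"
    by (rule continuous_on_eq[OF continuous_on_const[of _ 0]]) (use G_zero r in auto)
  have "continuous_on (B \<union> {y. norm y > r}) (G \<alpha> r b)"
    by (intro continuous_on_open_Un c1 c2 open_ball open_Collect_less continuous_intros)
  moreover have "B \<union> {y. norm y > r} = UNIV" using r by auto
  ultimately show ?thesis by simp
qed

lemma bounded_on_cball:
  fixes g :: "complex^'n \<Rightarrow> real"
  assumes "continuous_on B g" "r < 1"
  obtains M where "M \<ge> 0" "\<And>y. norm y \<le> r \<Longrightarrow> \<bar>g y\<bar> \<le> M"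
proof -
  have "compact (cball (0::complex^'n) r)" by simp
  moreover have "continuous_on (cball 0 r) g"
    by (rule continuous_on_subset[OF assms(1)]) (use assms in auto)
  ultimately have "bounded (g ` cball 0 r)" by (intro compact_imp_bounded compact_continuous_image)
  then obtain M where "M > 0" "\<And>x. x \<in> g ` cball 0 r \<Longrightarrow> norm x \<le> M" by (auto simp: bounded_pos)
  then show ?thesis by (intro that[of M]) auto
qed

lemma dG_bounded:
  assumes b: "b \<in> Basis" and r: "0 < r" "r < 1" and a: "\<alpha> \<ge> 2"
  obtains M where "M \<ge> 0" "\<And>y. \<bar>dG \<alpha> r b y\<bar> \<le> M"
proof -
  obtain MS where MS: "MS \<ge> 0" "\<And>y. norm y \<le> r \<Longrightarrow> \<bar>Sb b y\<bar> \<le> MS"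
    using bounded_on_cball[OF cont_Sb[OF b] r(2)] by blast
  obtain Mu where Mu: "Mu \<ge> 0" "\<And>y. norm y \<le> r \<Longrightarrow> \<bar>u y\<bar> \<le> Mu"
    using bounded_on_cball[OF cont_u r(2)] by blast
  let ?M = "MS + Mu * (2*\<alpha> + 4*\<alpha>*(\<alpha> - 1))"
  show ?thesis
  proof (rule that[of ?M])
    show "?M \<ge> 0" using MS Mu a by simp
    fix y
    show "\<bar>dG \<alpha> r b y\<bar> \<le> ?M"
    proof (cases "y \<in> ball 0 r")
      case False then show ?thesis using MS Mu a by (simp add: dG_def)
    next
      case True
      then have ny: "norm y < r" by simp
      have s0: "0 < sr r y" using power_strict_mono[OF ny norm_ge_zero, of 2] unfolding sr_def by linarith
      have "r^2 \<le> 1" using r by (simp add: power_le_one)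
      then have sA: "sr r y \<le> 1" unfolding sr_def using zero_le_power2[of "norm y"] by linarith
      have W1: "W \<alpha> r y \<le> 1" "W \<alpha> r y \<ge> 0" unfolding W_def using s0 sA a by (auto intro!: pw_le1)
      have p1: "sr r y powr (\<alpha> - 1) \<le> 1" "sr r y powr (\<alpha> - 2) \<le> 1"
        using s0 sA a by (auto intro!: pw_le1)
      have yb: "(y \<bullet> b)^2 \<le> 1"
      proof -
        have "\<bar>y \<bullet> b\<bar> \<le> 1" using Basis_le_norm[OF b, of y] ny r by simp
        then show ?thesis by (metis abs_ge_zero power2_abs power_le_one)
      qed
      define ee where "ee = sr r y powr (\<alpha> - 1)"
      define q where "q = (y \<bullet> b)^2 * sr r y powr (\<alpha> - 2)"
      have eeb: "0 \<le> ee" "ee \<le> 1" using p1 by (auto simp: ee_def)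
      have qb: "0 \<le> q" "q \<le> 1" unfolding q_def using p1 yb
        by (auto intro!: mult_le_one)
      have Weq: "Wbb \<alpha> r b y = -(2*\<alpha>*ee) + 4*\<alpha>*(\<alpha> - 1)*q"
        by (simp add: Wbb_def ee_def q_def algebra_simps)
      have k1: "2*\<alpha>*ee \<le> 2*\<alpha>" using eeb a by (simp add: mult_left_le)
      have k2: "4*\<alpha>*(\<alpha> - 1)*q \<le> 4*\<alpha>*(\<alpha> - 1)" using qb a by (simp add: mult_left_le)
      have k3: "0 \<le> 2*\<alpha>*ee" "0 \<le> 4*\<alpha>*(\<alpha> - 1)*q" using eeb qb a by auto
      have WB: "\<bar>Wbb \<alpha> r b y\<bar> \<le> 2*\<alpha> + 4*\<alpha>*(\<alpha> - 1)"
        unfolding Weq using k1 k2 k3 by linarith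
      have SB: "\<bar>Sb b y\<bar> \<le> MS" and UB: "\<bar>u y\<bar> \<le> Mu" using MS Mu ny by auto
      have "\<bar>W \<alpha> r y * Sb b y\<bar> \<le> 1 * MS"
        unfolding abs_mult using W1 SB by (intro mult_mono) auto
      moreover have "\<bar>u y * Wbb \<alpha> r b y\<bar> \<le> Mu * (2*\<alpha> + 4*\<alpha>*(\<alpha> - 1))"
        unfolding abs_mult using UB WB Mu by (intro mult_mono) auto
      ultimately have "\<bar>W \<alpha> r y * Sb b y - u y * Wbb \<alpha> r b y\<bar> \<le> MS + Mu * (2*\<alpha> + 4*\<alpha>*(\<alpha> - 1))"
        by linarith
      then show ?thesis using True by (simp add: dG_def)
    qed
  qed
qed

end

lemma integrable_cont_support:
  fixes g :: "'a::euclidean_space \<Rightarrow> real"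
  assumes c: "continuous_on UNIV g" and z: "\<And>y. norm y > R \<Longrightarrow> g y = 0"
  shows "integrable lborel g"
proof -
  have "compact (cball (0::'a) R)" by simp
  then have "bounded (g ` cball 0 R)"
    by (intro compact_imp_bounded compact_continuous_image continuous_on_subset[OF c]) auto
  then obtain M where M: "M > 0" "\<And>x. x \<in> g ` cball 0 R \<Longrightarrow> norm x \<le> M" by (auto simp: bounded_pos)
  have bd: "norm (g y) \<le> norm (M * indicator (cball 0 R) y)" for y
  proof (cases "norm y \<le> R")
    case True then show ?thesis using M(1) M(2)[of "g y"] by auto
  next
    case False then show ?thesis using z[of y] by simp
  qed
  have mg: "g \<in> borel_measurable lborel"
    using borel_measurable_continuous_onI[OF c] by simp
  have "integrable lborel (\<lambda>y. M * indicator (cball (0::'a) R) y)"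
    by (intro integrable_mult_right integrable_real_indicator) (use emeasure_lborel_cball_finite[of "0::'a" R] in auto)
  then show ?thesis
    by (rule Bochner_Integration.integrable_bound) (use mg bd in auto)
qed

lemma integral_translate:
  fixes g :: "'a::euclidean_space \<Rightarrow> real"
  assumes c: "continuous_on UNIV g"
  shows "integral\<^sup>L lborel (\<lambda>y. g (y + c)) = integral\<^sup>L lborel g"
proof -
  have mg: "g \<in> borel_measurable borel" using borel_measurable_continuous_onI[OF c] .
  have "integral\<^sup>L lborel g = integral\<^sup>L (distr lborel borel ((+) c)) g" by (simp add: lborel_distr_plus)
  also have "\<dots> = integral\<^sup>L lborel (\<lambda>x. g (c + x))"
    by (rule integral_distr) (use mg in auto)
  finally show ?thesis by (simp add: add.commute)
qed

context ctx
begin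

lemma G_lip:
  assumes b: "b \<in> Basis" and r: "0 < r" "r < 1" and a: "\<alpha> \<ge> 2"
    and M: "\<And>y. \<bar>dG \<alpha> r b y\<bar> \<le> M" and h: "h \<ge> 0"
  shows "\<bar>G \<alpha> r b (y + h *\<^sub>R b) - G \<alpha> r b y\<bar> \<le> M * h"
proof -
  let ?g = "\<lambda>t. G \<alpha> r b (y + t *\<^sub>R b)"
  have cont: "continuous_on {0..h} ?g"
    by (rule continuous_on_compose2[OF cont_G[OF b _ r(2) a]]) (use r in \<open>auto intro!: continuous_intros\<close>)
  have der: "(?g has_vector_derivative dG \<alpha> r b (y + t *\<^sub>R b)) (at t)"
    if "t \<in> {0<..<h} - {t. norm (y + t *\<^sub>R b) = r}" for t
    using G_dir[OF b r(2) _, of y t \<alpha>] that r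
    by (simp add: has_real_derivative_iff_has_vector_derivative)
  have "((\<lambda>t. dG \<alpha> r b (y + t *\<^sub>R b)) has_integral (?g h - ?g 0)) {0..h}"
    by (rule fundamental_theorem_of_calculus_interior_strong[OF finite_sphere_line[OF b] h der cont])
  then have "norm (?g h - ?g 0) \<le> M * measure lborel (cbox 0 h)"
    using M by (intro has_integral_bound[of M]) (auto simp: cbox_interval intro: order.trans[OF abs_ge_zero M])
  then show ?thesis using h by simp
qed

end

context ctx
begin

lemma meas_dG:
  assumes b: "b \<in> Basis" and r: "0 < r" "r < 1" and a: "\<alpha> \<ge> 2"
  shows "dG \<alpha> r b \<in> borel_measurable lborel"
proof -
  let ?E = "\<lambda>y. W \<alpha> r y * Sb b y - u y * Wbb \<alpha> r b y"
  have cW: "continuous_on UNIV (W \<alpha> r)" unfolding W_def sr_def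
    using a by (intro continuous_on_powr' continuous_intros) auto
  have pos: "\<forall>y\<in>ball (0::complex^'n) r. sr r y \<noteq> 0"
  proof
    fix y :: "complex^'n" assume "y \<in> ball 0 r"
    then have "norm y < r" by simp
    from power_strict_mono[OF this norm_ge_zero, of 2] show "sr r y \<noteq> 0" unfolding sr_def by linarith
  qed
  have sub: "ball (0::complex^'n) r \<subseteq> B" using r by auto
  have "continuous_on (ball 0 r) ?E" unfolding Wbb_def sr_def
    using pos unfolding sr_def
    by (intro continuous_intros continuous_on_subset[OF cW] continuous_on_subset[OF cont_Sb[OF b] sub]
        continuous_on_subset[OF cont_u sub] continuous_on_powr) auto
  from borel_measurable_continuous_on_indicator[OF _ this]
  have "(\<lambda>y. indicator (ball 0 r) y *\<^sub>R ?E y) \<in> borel_measurable borel" by simp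
  moreover have "(\<lambda>y. indicator (ball 0 r) y *\<^sub>R ?E y) = dG \<alpha> r b" by (simp add: dG_def fun_eq_iff)
  ultimately show ?thesis by simp
qed

lemma green_b:
  assumes b: "b \<in> Basis" and r: "0 < r" "r < 1" and a: "\<alpha> \<ge> 2"
  shows "integral\<^sup>L lborel (dG \<alpha> r b) = 0" and "integrable lborel (dG \<alpha> r b)"
proof -
  obtain M where M: "M \<ge> 0" "\<And>y. \<bar>dG \<alpha> r b y\<bar> \<le> M"
    using dG_bounded[OF b r a] by blast
  define hs where "hs k = inverse (real (Suc k))" for k
  have hs_pos: "hs k > 0" "hs k \<le> 1" for k by (auto simp: hs_def field_simps)
  have hs_lim: "hs \<longlonglongrightarrow> 0" unfolding hs_def by (rule LIMSEQ_inverse_real_of_nat)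
  define Q where "Q k y = (G \<alpha> r b (y + hs k *\<^sub>R b) - G \<alpha> r b y) / hs k" for k y
  have cG: "continuous_on UNIV (G \<alpha> r b)" by (rule cont_G[OF b _ r(2) a]) (use r in auto)
  have nb: "norm b = 1" using b by simp
  have G0: "G \<alpha> r b y = 0" if "norm y > r" for y using G_zero[OF that] r by simp
  have intG: "integrable lborel (G \<alpha> r b)" by (rule integrable_cont_support[OF cG G0])
  have intGs: "integrable lborel (\<lambda>y. G \<alpha> r b (y + c))" for c :: "complex^'n"
  proof (rule integrable_cont_support[where R = "r + norm c"])
    show "continuous_on UNIV (\<lambda>y. G \<alpha> r b (y + c))"
      by (rule continuous_on_compose2[OF cG]) (auto intro!: continuous_intros)
    fix y :: "complex^'n" assume "norm y > r + norm c"
    then have "norm (y + c) > r" using norm_triangle_ineq2[of y "-c"] by simp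
    then show "G \<alpha> r b (y + c) = 0" by (rule G0)
  qed
  have intQ: "integral\<^sup>L lborel (Q k) = 0" for k
  proof -
    have "integral\<^sup>L lborel (Q k) = (integral\<^sup>L lborel (\<lambda>y. G \<alpha> r b (y + hs k *\<^sub>R b)) - integral\<^sup>L lborel (G \<alpha> r b)) / hs k"
      unfolding Q_def by (simp add: Bochner_Integration.integral_diff[OF intGs intG])
    also have "\<dots> = 0" by (simp add: integral_translate[OF cG])
    finally show ?thesis .
  qed
  have measQ: "Q k \<in> borel_measurable lborel" for k
    unfolding Q_def using intGs intG by (auto intro!: borel_measurable_divide borel_measurable_diff)
  have bound: "\<And>k. AE y in lborel. norm (Q k y) \<le> M * indicator (cball 0 (r + 1)) y"
  proof (intro AE_I2)
    fix k y
    show "norm (Q k y) \<le> M * indicator (cball 0 (r + 1)) y"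
    proof (cases "norm y \<le> r + 1")
      case True
      have "\<bar>G \<alpha> r b (y + hs k *\<^sub>R b) - G \<alpha> r b y\<bar> \<le> M * hs k"
        by (rule G_lip[OF b r a M(2)]) (use hs_pos(1)[of k] in simp)
      then have "\<bar>Q k y\<bar> \<le> M" using hs_pos[of k] by (simp add: Q_def divide_le_eq abs_divide)
      then show ?thesis using True by simp
    next
      case False
      have "norm (y + hs k *\<^sub>R b) \<ge> norm y - hs k" using norm_triangle_ineq2[of y "- hs k *\<^sub>R b"] nb hs_pos[of k]
        by simp
      then have "norm (y + hs k *\<^sub>R b) > r" using False hs_pos[of k] by simp
      then show ?thesis using False G0[of y] G0[of "y + hs k *\<^sub>R b"] r by (simp add: Q_def)
    qed
  qed
  have lim: "AE y in lborel. (\<lambda>k. Q k y) \<longlonglongrightarrow> dG \<alpha> r b y"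
    using AE_not_in[OF sphere_null[of 0 r]]
  proof eventually_elim
    case (elim y)
    then have ny: "norm y \<noteq> r" by simp
    have "((\<lambda>h. (G \<alpha> r b (y + (0 + h) *\<^sub>R b) - G \<alpha> r b (y + 0 *\<^sub>R b)) / h) \<longlongrightarrow> dG \<alpha> r b y) (at 0)"
      using G_dir0[OF b r(2) _ ny, of \<alpha>] r unfolding DERIV_def by simp
    then have "((\<lambda>h. (G \<alpha> r b (y + h *\<^sub>R b) - G \<alpha> r b y) / h) \<longlongrightarrow> dG \<alpha> r b y) (at 0)" by simp
    moreover have "\<forall>i. hs i \<in> UNIV - {0}" using hs_pos by (auto simp: less_le)
    ultimately have "((\<lambda>h. (G \<alpha> r b (y + h *\<^sub>R b) - G \<alpha> r b y) / h) \<circ> hs) \<longlonglongrightarrow> dG \<alpha> r b y"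
      using hs_lim unfolding tendsto_at_iff_sequentially by blast
    then show ?case by (simp add: Q_def o_def)
  qed
  have intw: "integrable lborel (\<lambda>y. M * indicator (cball (0::complex^'n) (r + 1)) y)"
    by (intro integrable_mult_right integrable_real_indicator)
       (use emeasure_lborel_cball_finite[of "0::complex^'n" "r+1"] in auto)
  have md: "dG \<alpha> r b \<in> borel_measurable lborel" by (rule meas_dG[OF b r a])
  from integral_dominated_convergence[OF md measQ intw lim bound]
  have "(\<lambda>k. integral\<^sup>L lborel (Q k)) \<longlonglongrightarrow> integral\<^sup>L lborel (dG \<alpha> r b)" .
  then show "integral\<^sup>L lborel (dG \<alpha> r b) = 0" using intQ by (simp add: LIMSEQ_const_iff)
  show "integrable lborel (dG \<alpha> r b)"
    by (rule integrable_dominated_convergence[OF md measQ intw lim bound])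
qed

end

lemma meas_ball:
  fixes E :: "'a::euclidean_space \<Rightarrow> real"
  assumes "continuous_on (ball 0 r) E"
  shows "(\<lambda>y. indicator (ball 0 r) y * E y) \<in> borel_measurable lborel"
proof -
  from borel_measurable_continuous_on_indicator[OF _ assms]
  have "(\<lambda>y. indicator (ball 0 r) y *\<^sub>R E y) \<in> borel_measurable borel" by simp
  then show ?thesis by simp
qed

lemma int_ball:
  fixes E :: "'a::euclidean_space \<Rightarrow> real"
  assumes "continuous_on (ball 0 r) E" and bd: "\<And>y. y \<in> ball 0 r \<Longrightarrow> \<bar>E y\<bar> \<le> M"
  shows "integrable lborel (\<lambda>y. indicator (ball 0 r) y * E y)"
proof -
  have "integrable lborel (\<lambda>y. M * indicator (cball (0::'a) r) y)"
    by (intro integrable_mult_right integrable_real_indicator)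
       (use emeasure_lborel_cball_finite[of "0::'a" r] in auto)
  moreover have "AE y in lborel. norm (indicator (ball 0 r) y * E y) \<le> norm (M * indicator (cball (0::'a) r) y)"
  proof (intro AE_I2)
    fix y :: 'a
    show "norm (indicator (ball 0 r) y * E y) \<le> norm (M * indicator (cball (0::'a) r) y)"
    proof (cases "y \<in> ball 0 r")
      case True
      then have "\<bar>E y\<bar> \<le> M" by (rule bd)
      then show ?thesis using True by (auto simp: abs_le_iff)
    next
      case False then show ?thesis by simp
    qed
  qed
  ultimately show ?thesis
    by (rule Bochner_Integration.integrable_bound[OF _ meas_ball[OF assms(1)]])
qed

lemma mono_lim_bound:
  fixes g :: "nat \<Rightarrow> 'a \<Rightarrow> real"
  assumes m: "\<And>k. g k \<in> borel_measurable M"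
    and inc: "\<And>x k. g k x \<le> g (Suc k) x"
    and lim: "\<And>x. (\<lambda>k. g k x) \<longlonglongrightarrow> H x"
    and bd: "\<And>k. (\<integral>\<^sup>+ x. ennreal (g k x) \<partial>M) \<le> K"
  shows "(\<integral>\<^sup>+ x. ennreal (H x) \<partial>M) \<le> K"
proof -
  have "incseq (\<lambda>k x. ennreal (g k x))"
    by (intro incseq_SucI) (auto simp: le_fun_def inc ennreal_leI)
  moreover have "\<And>k. (\<lambda>x. ennreal (g k x)) \<in> borel_measurable M" using m by measurable
  moreover have "\<And>x. (\<lambda>k. ennreal (g k x)) \<longlonglongrightarrow> ennreal (H x)"
    by (intro tendsto_ennrealI lim)
  ultimately have "(\<lambda>k. \<integral>\<^sup>+ x. ennreal (g k x) \<partial>M) \<longlonglongrightarrow> (\<integral>\<^sup>+ x. ennreal (H x) \<partial>M)"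
    by (rule nn_integral_LIMSEQ)
  then show ?thesis by (rule LIMSEQ_le_const2) (use bd in auto)
qed

context ctx
begin

definition "LW \<alpha> r y = 4*\<alpha>*(\<alpha> - 1)*(norm y)^2 * (sr r y) powr (\<alpha> - 2) - 2*\<alpha>*real DIM(complex^'n) * (sr r y) powr (\<alpha> - 1)"

lemma sum_Wbb: fixes y :: "complex^'n" shows "(\<Sum>b\<in>Basis. Wbb \<alpha> r b y) = LW \<alpha> r y"
proof -
  have "(\<Sum>b\<in>(Basis::(complex^'n) set). (y \<bullet> b)^2) = (norm y)^2"
  proof -
    have "(norm y)^2 = y \<bullet> y" by (simp add: power2_norm_eq_inner)
    also have "\<dots> = (\<Sum>b\<in>Basis. (y \<bullet> b) * (y \<bullet> b))" by (rule euclidean_inner)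
    finally show ?thesis by (simp add: power2_eq_square)
  qed
  moreover have "(\<Sum>b\<in>(Basis::(complex^'n) set). -2*\<alpha>* (sr r y) powr (\<alpha> - 1)) = -2*\<alpha>* (sr r y) powr (\<alpha> - 1) * real DIM(complex^'n)"
    by (simp only: sum_constant) (simp add: algebra_simps)
  moreover have "(\<Sum>b\<in>(Basis::(complex^'n) set). 4*\<alpha>*(\<alpha> - 1)*(y \<bullet> b)^2 * (sr r y) powr (\<alpha> - 2))
      = 4*\<alpha>*(\<alpha> - 1)*(\<Sum>b\<in>(Basis::(complex^'n) set). (y \<bullet> b)^2) * (sr r y) powr (\<alpha> - 2)"
    by (simp only: sum_distrib_right[symmetric] sum_distrib_left[symmetric])
  ultimately show ?thesis unfolding Wbb_def LW_def sum.distrib by (simp add: algebra_simps)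
qed

lemma green:
  assumes r: "0 < r" "r < 1" and a: "\<alpha> \<ge> 2"
  shows "integrable lborel (\<lambda>y. indicator (ball 0 r) y * (W \<alpha> r y * L y - u y * LW \<alpha> r y))"
    and "integral\<^sup>L lborel (\<lambda>y. indicator (ball 0 r) y * (W \<alpha> r y * L y - u y * LW \<alpha> r y)) = 0"
proof -
  have eq: "(\<lambda>y. indicator (ball 0 r) y * (W \<alpha> r y * L y - u y * LW \<alpha> r y)) = (\<lambda>y. \<Sum>b\<in>Basis. dG \<alpha> r b y)"
  proof
    fix y :: "complex^'n"
    have "(\<Sum>b\<in>Basis. dG \<alpha> r b y) = indicator (ball 0 r) y * ((\<Sum>b\<in>Basis. W \<alpha> r y * Sb b y) - (\<Sum>b\<in>Basis. u y * Wbb \<alpha> r b y))"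
      unfolding dG_def by (simp only: sum_distrib_left[symmetric] sum_subtractf)
    also have "\<dots> = indicator (ball 0 r) y * (W \<alpha> r y * L y - u y * LW \<alpha> r y)"
      by (simp only: sum_distrib_left[symmetric] L_def sum_Wbb)
    finally show "indicator (ball 0 r) y * (W \<alpha> r y * L y - u y * LW \<alpha> r y) = (\<Sum>b\<in>Basis. dG \<alpha> r b y)" by simp
  qed
  show "integrable lborel (\<lambda>y. indicator (ball 0 r) y * (W \<alpha> r y * L y - u y * LW \<alpha> r y))"
    unfolding eq by (intro Bochner_Integration.integrable_sum green_b(2)[OF _ r a])
  show "integral\<^sup>L lborel (\<lambda>y. indicator (ball 0 r) y * (W \<alpha> r y * L y - u y * LW \<alpha> r y)) = 0"
    unfolding eq by (subst Bochner_Integration.integral_sum) (auto intro!: green_b[OF _ r a] sum.neutral simp: green_b(1)[OF _ r a])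
qed

end

definition rk :: "nat \<Rightarrow> real" where "rk k = 1 - inverse (real k + 2)"

lemma rk_pos: "0 < rk k" and rk_lt1: "rk k < 1" and rk_mono: "rk k \<le> rk (Suc k)"
  by (auto simp: rk_def field_simps)

lemma rk_lim: "rk \<longlonglongrightarrow> 1"
proof -
  have "(\<lambda>k. inverse (real (Suc (Suc k)))) \<longlonglongrightarrow> 0"
    using LIMSEQ_inverse_real_of_nat by (rule LIMSEQ_Suc)
  then have "(\<lambda>k. 1 - inverse (real (Suc (Suc k)))) \<longlonglongrightarrow> 1 - 0" by (intro tendsto_intros)
  moreover have "rk = (\<lambda>k. 1 - inverse (real (Suc (Suc k))))" by (simp add: fun_eq_iff rk_def add.commute)
  ultimately show ?thesis by simp
qed

lemma rk_ev: "norm (y::'a::real_normed_vector) < 1 \<Longrightarrow> eventually (\<lambda>k. norm y < rk k) sequentially"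
  using rk_lim by (rule order_tendstoD) 

context ctx
begin

lemma sr_pos: "norm y < r \<Longrightarrow> 0 < sr r y"
  using power_strict_mono[of "norm y" r 2] unfolding sr_def by simp

lemma sr_le1: "0 \<le> r \<Longrightarrow> r \<le> 1 \<Longrightarrow> sr r y \<le> 1 - (norm y)^2"
  using power_mono[of r 1 2] unfolding sr_def by simp

lemma sr_mono: "r \<le> r' \<Longrightarrow> 0 \<le> r \<Longrightarrow> sr r y \<le> sr r' y"
  using power_mono[of r r' 2] unfolding sr_def by simp

lemma W_mono: "r \<le> r' \<Longrightarrow> 0 \<le> r \<Longrightarrow> 0 \<le> \<alpha> \<Longrightarrow> W \<alpha> r y \<le> W \<alpha> r' y"
  unfolding W_def by (intro powr_mono2 max.mono order_refl sr_mono) auto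

lemma W_le: "0 \<le> r \<Longrightarrow> r \<le> 1 \<Longrightarrow> 0 \<le> \<alpha> \<Longrightarrow> norm y < 1 \<Longrightarrow> W \<alpha> r y \<le> (1 - (norm y)^2) powr \<alpha>"
proof -
  assume r: "0 \<le> r" "r \<le> 1" and a: "0 \<le> \<alpha>" and y: "norm y < 1"
  have "(norm y)^2 < 1" using y by (simp add: power_less_one_iff abs_less_iff)
  then show ?thesis unfolding W_def using sr_le1[OF r, of y] by (intro powr_mono2 a) auto
qed

lemma W_lim:
  assumes y: "norm y < 1" and a: "\<alpha> > 0"
  shows "(\<lambda>k. W \<alpha> (rk k) y) \<longlonglongrightarrow> (1 - (norm y)^2) powr \<alpha>"
proof -
  have pos: "1 - (norm y)^2 > 0" using y by (simp add: power_less_one_iff abs_less_iff)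
  have "(\<lambda>k. max 0 (sr (rk k) y)) \<longlonglongrightarrow> max 0 (1^2 - (norm y)^2)"
    unfolding sr_def by (intro tendsto_intros rk_lim)
  then have "(\<lambda>k. (max 0 (sr (rk k) y)) powr \<alpha>) \<longlonglongrightarrow> (max 0 (1^2 - (norm y)^2)) powr \<alpha>"
    using pos by (intro tendsto_powr tendsto_const) auto
  then show ?thesis using pos by (simp add: W_def)
qed

lemma cont_W: "\<alpha> > 0 \<Longrightarrow> continuous_on UNIV (W \<alpha> r)"
  unfolding W_def sr_def by (intro continuous_on_powr' continuous_intros) auto

lemma cont_srpow: "continuous_on (ball 0 r) (\<lambda>y::complex^'n. sr r y powr e)"
proof -
  have "\<forall>y\<in>ball (0::complex^'n) r. sr r y \<noteq> 0" using sr_pos by (metis less_irrefl mem_ball_0)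
  then show ?thesis unfolding sr_def by (intro continuous_on_powr continuous_intros) (auto simp: sr_def)
qed

lemma L_bounded:
  assumes "r < 1" obtains M where "M \<ge> 0" "\<And>y. norm y \<le> r \<Longrightarrow> \<bar>L y\<bar> \<le> M"
  using bounded_on_cball[OF cont_L assms] by blast

lemma u_bounded:
  assumes "r < 1" obtains M where "M \<ge> 0" "\<And>y. norm y \<le> r \<Longrightarrow> \<bar>u y\<bar> \<le> M"
  using bounded_on_cball[OF cont_u assms] by blast

lemma srpow_le1: "y \<in> ball 0 r \<Longrightarrow> r < 1 \<Longrightarrow> 0 \<le> e \<Longrightarrow> sr r y powr e \<le> 1"
proof -
  assume y: "y \<in> ball 0 r" and r: "r < 1" and e: "0 \<le> e"
  have "0 < sr r y" using sr_pos y by simp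
  moreover have "sr r y \<le> 1"
  proof -
    have "0 \<le> r" using y by (metis dual_order.trans mem_ball_0 norm_ge_zero order_less_imp_le)
    then have "r^2 \<le> 1" using r by (simp add: power_le_one)
    then show ?thesis unfolding sr_def using zero_le_power2[of "norm y"] by linarith
  qed
  ultimately show ?thesis using e by (intro powr_le1) auto
qed

lemma W_le1: "y \<in> ball 0 r \<Longrightarrow> r < 1 \<Longrightarrow> 0 \<le> \<alpha> \<Longrightarrow> W \<alpha> r y \<le> 1"
  using srpow_le1[of y r \<alpha>] sr_pos[of y r] by (simp add: W_def)

lemma int_WL:
  assumes r: "0 < r" "r < 1" and a: "\<alpha> \<ge> 2"
  shows "integrable lborel (\<lambda>y. indicator (ball 0 r) y * (W \<alpha> r y * L y))"
proof -
  obtain M where M: "M \<ge> 0" "\<And>y. norm y \<le> r \<Longrightarrow> \<bar>L y\<bar> \<le> M" using L_bounded[OF r(2)] by blast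
  have sub: "ball (0::complex^'n) r \<subseteq> B" using r by auto
  show ?thesis
  proof (rule int_ball)
    show "continuous_on (ball 0 r) (\<lambda>y. W \<alpha> r y * L y)"
      using a by (intro continuous_intros continuous_on_subset[OF cont_W] continuous_on_subset[OF cont_L sub]) auto
    fix y :: "complex^'n" assume y: "y \<in> ball 0 r"
    have "\<bar>W \<alpha> r y\<bar> \<le> 1" using W_le1[OF y r(2)] a unfolding W_def by simp
    then show "\<bar>W \<alpha> r y * L y\<bar> \<le> 1 * M" unfolding abs_mult using M y by (intro mult_mono) auto
  qed
qed

end

context ctx
begin

definition "Af \<alpha> y = indicator B y * ((1 - (norm y)^2) powr \<alpha> * L y)"
definition "Cf \<alpha> y = indicator B y * ((1 - norm y) powr (\<alpha> - 2) * u y)"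

lemma normsq_lt1: "norm (y::'a::real_normed_vector) < 1 \<Longrightarrow> (norm y)^2 < 1"
proof -
  assume h: "norm y < 1"
  have "norm y * norm y \<le> norm y * 1" by (rule mult_left_mono) (use h in auto)
  then show ?thesis using h by (simp add: power2_eq_square)
qed

lemma meas_Af: "\<alpha> > 0 \<Longrightarrow> Af \<alpha> \<in> borel_measurable lborel"
proof -
  assume a: "\<alpha> > 0"
  have "continuous_on B (\<lambda>y. (1 - (norm y)^2) powr \<alpha> * L y)"
    using a normsq_lt1 by (intro continuous_intros continuous_on_powr' cont_L) force+
  from meas_ball[OF this] show ?thesis unfolding Af_def .
qed

lemma meas_Cf: "Cf \<alpha> \<in> borel_measurable lborel"
proof -
  have "continuous_on B (\<lambda>y. (1 - norm y) powr (\<alpha> - 2) * u y)"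
    by (intro continuous_intros continuous_on_powr cont_u) auto
  from meas_ball[OF this] show ?thesis unfolding Cf_def .
qed

lemma green_eq:
  assumes r: "0 < r" "r < 1" and a: "\<alpha> \<ge> 2"
  shows "integrable lborel (\<lambda>y. indicator (ball 0 r) y * (u y * LW \<alpha> r y))"
    and "integral\<^sup>L lborel (\<lambda>y. indicator (ball 0 r) y * (W \<alpha> r y * L y))
       = integral\<^sup>L lborel (\<lambda>y. indicator (ball 0 r) y * (u y * LW \<alpha> r y))"
proof -
  have e: "(\<lambda>y. indicator (ball 0 r) y * (u y * LW \<alpha> r y)) =
     (\<lambda>y. indicator (ball 0 r) y * (W \<alpha> r y * L y) - indicator (ball 0 r) y * (W \<alpha> r y * L y - u y * LW \<alpha> r y))"
    by (simp add: fun_eq_iff algebra_simps)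
  show i: "integrable lborel (\<lambda>y. indicator (ball 0 r) y * (u y * LW \<alpha> r y))"
    unfolding e by (intro Bochner_Integration.integrable_diff int_WL[OF r a] green(1)[OF r a])
  show "integral\<^sup>L lborel (\<lambda>y. indicator (ball 0 r) y * (W \<alpha> r y * L y))
       = integral\<^sup>L lborel (\<lambda>y. indicator (ball 0 r) y * (u y * LW \<alpha> r y))"
    unfolding e by (simp add: Bochner_Integration.integral_diff[OF int_WL[OF r a] green(1)[OF r a]] green(2)[OF r a])
qed

lemma dir1:
  assumes hyp: "\<forall>z\<in>B. Re (f z * cnj (laplacian f z)) \<ge> 0" and a: "\<alpha> \<ge> 2"
    and fin: "(\<integral>\<^sup>+ y. ennreal (Cf \<alpha> y) \<partial>lborel) < \<infinity>"
  shows "(\<integral>\<^sup>+ y. ennreal (Af \<alpha> y) \<partial>lborel) < \<infinity>"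
proof -
  define c0 where "c0 = 4*\<alpha>*(\<alpha> - 1) * 2 powr (\<alpha> - 2)"
  have c0: "c0 \<ge> 0" using a by (simp add: c0_def)
  define g where "g k y = indicator (ball 0 (rk k)) y * (W \<alpha> (rk k) y * L y)" for k y
  have Lnn: "y \<in> B \<Longrightarrow> L y \<ge> 0" for y using L_nonneg[OF hyp] by simp
  have gnn: "g k y \<ge> 0" for k y
  proof (cases "y \<in> ball 0 (rk k)")
  case True
  then have "L y \<ge> 0" using rk_lt1[of k] by (intro Lnn) auto
  moreover have "W \<alpha> (rk k) y \<ge> 0" by (simp add: W_def)
  ultimately show ?thesis using True by (simp add: g_def)
qed (simp add: g_def)
  have bound: "(\<integral>\<^sup>+ y. ennreal (g k y) \<partial>lborel) \<le> ennreal c0 * (\<integral>\<^sup>+ y. ennreal (Cf \<alpha> y) \<partial>lborel)" for k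
  proof -
    define r where "r = rk k"
    have r: "0 < r" "r < 1" using rk_pos rk_lt1 by (auto simp: r_def)
    have sub: "ball (0::complex^'n) r \<subseteq> B" using r by auto
    define P where "P y = indicator (ball 0 r) y * (u y * (4*\<alpha>*(\<alpha> - 1)*(norm y)^2 * sr r y powr (\<alpha> - 2)))" for y
    obtain Mu where Mu: "Mu \<ge> 0" "\<And>y. norm y \<le> r \<Longrightarrow> \<bar>u y\<bar> \<le> Mu" using u_bounded[OF r(2)] by blast
    have intP: "integrable lborel P" unfolding P_def
    proof (rule int_ball)
      show "continuous_on (ball 0 r) (\<lambda>y. u y * (4*\<alpha>*(\<alpha> - 1)*(norm y)^2 * sr r y powr (\<alpha> - 2)))"
        by (intro continuous_intros cont_srpow continuous_on_subset[OF cont_u sub])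
      fix y :: "complex^'n" assume y: "y \<in> ball 0 r"
      have n1: "(norm y)^2 \<le> 1" using y r by (simp add: power_le_one)
      have "\<bar>4*\<alpha>*(\<alpha> - 1)*(norm y)^2 * sr r y powr (\<alpha> - 2)\<bar> \<le> 4*\<alpha>*(\<alpha> - 1)*1*1"
        using a n1 srpow_le1[OF y r(2), of "\<alpha> - 2"]
        by (auto simp: abs_mult intro!: mult_mono mult_le_one)
      then show "\<bar>u y * (4*\<alpha>*(\<alpha> - 1)*(norm y)^2 * sr r y powr (\<alpha> - 2))\<bar> \<le> Mu * (4*\<alpha>*(\<alpha> - 1)*1*1)"
        unfolding abs_mult[of "u y"] using Mu y by (intro mult_mono) auto
    qed
    have gk: "g k = (\<lambda>y. indicator (ball 0 r) y * (W \<alpha> r y * L y))" by (simp add: g_def r_def fun_eq_iff)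
    have le1: "integral\<^sup>L lborel (g k) \<le> integral\<^sup>L lborel P"
      unfolding gk green_eq(2)[OF r a]
    proof (rule integral_mono[OF green_eq(1)[OF r a] intP])
      fix y :: "complex^'n"
      show "indicator (ball 0 r) y * (u y * LW \<alpha> r y) \<le> P y"
      proof (cases "y \<in> ball 0 r")
        case True
        have "LW \<alpha> r y \<le> 4*\<alpha>*(\<alpha> - 1)*(norm y)^2 * sr r y powr (\<alpha> - 2)"
          unfolding LW_def using a by simp
        then have "u y * LW \<alpha> r y \<le> u y * (4*\<alpha>*(\<alpha> - 1)*(norm y)^2 * sr r y powr (\<alpha> - 2))"
          by (intro mult_left_mono u_nonneg)
        then show ?thesis using True by (simp add: P_def)
      next
        case False then show ?thesis by (simp add: P_def)
      qed
    qed
    have le2: "P y \<le> c0 * Cf \<alpha> y" for y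
    proof (cases "y \<in> ball 0 r")
      case False then show ?thesis using c0 u_nonneg[of y]
        by (simp add: P_def Cf_def indicator_def)
    next
      case True
      then have yB: "y \<in> B" and ny: "norm y < 1" using sub by auto
      have s0: "0 < sr r y" using sr_pos True by simp
      have s2: "sr r y \<le> 2 * (1 - norm y)"
      proof -
        have "sr r y \<le> 1 - (norm y)^2" using sr_le1[of r y] r by simp
        also have "\<dots> = (1 - norm y) * (1 + norm y)" by (simp add: power2_eq_square algebra_simps)
        also have "\<dots> \<le> (1 - norm y) * 2" using ny by (intro mult_left_mono) auto
        finally show ?thesis by simp
      qed
      have "sr r y powr (\<alpha> - 2) \<le> (2 * (1 - norm y)) powr (\<alpha> - 2)"
        using s0 s2 a by (intro powr_mono2) auto
      also have "\<dots> = 2 powr (\<alpha> - 2) * (1 - norm y) powr (\<alpha> - 2)"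
        using ny by (intro powr_mult)
      finally have pw: "sr r y powr (\<alpha> - 2) \<le> 2 powr (\<alpha> - 2) * (1 - norm y) powr (\<alpha> - 2)" .
      have n1: "(norm y)^2 \<le> 1" using ny by (simp add: power_le_one)
      have "4*\<alpha>*(\<alpha> - 1)*(norm y)^2 * sr r y powr (\<alpha> - 2) \<le> 4*\<alpha>*(\<alpha> - 1)*1 * (2 powr (\<alpha> - 2) * (1 - norm y) powr (\<alpha> - 2))"
        using a n1 pw by (intro mult_mono) auto
      then have "u y * (4*\<alpha>*(\<alpha> - 1)*(norm y)^2 * sr r y powr (\<alpha> - 2)) \<le> u y * (c0 * (1 - norm y) powr (\<alpha> - 2))"
        by (intro mult_left_mono u_nonneg) (simp add: c0_def algebra_simps)
      then show ?thesis using True yB by (simp add: P_def Cf_def algebra_simps)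
    qed
    have "(\<integral>\<^sup>+ y. ennreal (g k y) \<partial>lborel) = ennreal (integral\<^sup>L lborel (g k))"
    proof (rule nn_integral_eq_integral)
      show "integrable lborel (g k)" unfolding gk by (rule int_WL[OF r a])
      show "AE y in lborel. 0 \<le> g k y" using gnn by simp
    qed
    also have "\<dots> \<le> ennreal (integral\<^sup>L lborel P)" using le1 by (rule ennreal_leI)
    also have "\<dots> = (\<integral>\<^sup>+ y. ennreal (P y) \<partial>lborel)"
    proof -
      have "P y \<ge> 0" for y unfolding P_def using a u_nonneg[of y] sr_pos[of y r]
        by (auto simp: indicator_def)
      then show ?thesis by (intro nn_integral_eq_integral[symmetric] intP) auto
    qed
    also have "\<dots> \<le> (\<integral>\<^sup>+ y. ennreal c0 * ennreal (Cf \<alpha> y) \<partial>lborel)"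
    proof (intro nn_integral_mono)
      fix x :: "complex^'n"
      have "ennreal (P x) \<le> ennreal (c0 * Cf \<alpha> x)" by (rule ennreal_leI) (rule le2)
      also have "\<dots> = ennreal c0 * ennreal (Cf \<alpha> x)" by (rule ennreal_mult'[OF c0])
      finally show "ennreal (P x) \<le> ennreal c0 * ennreal (Cf \<alpha> x)" .
    qed
    also have "\<dots> = ennreal c0 * (\<integral>\<^sup>+ y. ennreal (Cf \<alpha> y) \<partial>lborel)"
      by (rule nn_integral_cmult) (use meas_Cf in measurable)
    finally show ?thesis .
  qed
  have meas_g: "g k \<in> borel_measurable lborel" for k
  proof -
    have "integrable lborel (g k)" using int_WL[of "rk k" \<alpha>] a rk_pos[of k] rk_lt1[of k]
      unfolding g_def by simp
    then show ?thesis by (rule borel_measurable_integrable)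
  qed
  have inc: "g k y \<le> g (Suc k) y" for k y
  proof (cases "y \<in> ball 0 (rk k)")
    case True
    then have y2: "y \<in> ball 0 (rk (Suc k))" using rk_mono[of k] by auto
    have "y \<in> B" using True rk_lt1[of k] by auto
    then have "L y \<ge> 0" by (rule Lnn)
    moreover have "W \<alpha> (rk k) y \<le> W \<alpha> (rk (Suc k)) y"
      using rk_mono rk_pos a by (intro W_mono) (auto simp: less_imp_le)
    ultimately show ?thesis using True y2 by (simp add: g_def mult_right_mono)
  next
    case False then show ?thesis using gnn by (simp add: g_def)
  qed
  have lim: "(\<lambda>k. g k y) \<longlonglongrightarrow> Af \<alpha> y" for y
  proof (cases "y \<in> B")
    case True
    then have ny: "norm y < 1" by simp
    have "(\<lambda>k. W \<alpha> (rk k) y * L y) \<longlonglongrightarrow> (1 - (norm y)^2) powr \<alpha> * L y"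
      using W_lim[OF ny] a by (intro tendsto_intros) auto
    moreover have "eventually (\<lambda>k. W \<alpha> (rk k) y * L y = g k y) sequentially"
      using rk_ev[OF ny] by eventually_elim (simp add: g_def)
    ultimately show ?thesis using True by (simp add: Af_def Lim_transform_eventually)
  next
    case False
    then have "g k y = 0" for k using rk_lt1[of k] by (auto simp: g_def)
    then show ?thesis using False by (simp add: Af_def)
  qed
  have "(\<integral>\<^sup>+ y. ennreal (Af \<alpha> y) \<partial>lborel) \<le> ennreal c0 * (\<integral>\<^sup>+ y. ennreal (Cf \<alpha> y) \<partial>lborel)"
    by (rule mono_lim_bound[OF meas_g inc lim bound])
  also have "\<dots> < \<infinity>" using fin by (simp add: ennreal_mult_less_top)
  finally show ?thesis .
qed

end

context ctx
begin

lemma key2: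
  assumes y: "y \<in> ball 0 r" and r: "0 < r" "r < 1" and a: "\<alpha> \<ge> 2"
    and N: "N = real DIM(complex^'n)" and rho: "\<rho> = sqrt (max (1/2) (1 - 1/(2*N)))"
    and Mu: "Mu \<ge> 0" "\<And>y. norm y \<le> \<rho> \<Longrightarrow> \<bar>u y\<bar> \<le> Mu"
  shows "\<alpha> * u y * sr r y powr (\<alpha> - 2) \<le> u y * LW \<alpha> r y + (2*N + 1) * \<alpha> * Mu * indicator (cball 0 \<rho>) y"
proof -
  define s where "s = sr r y"
  define e2 where "e2 = s powr (\<alpha> - 2)"
  have s0: "0 < s" using sr_pos y by (simp add: s_def)
  have e2b: "0 \<le> e2" "e2 \<le> 1" using srpow_le1[OF y r(2), of "\<alpha> - 2"] a by (auto simp: e2_def s_def)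
  have e1: "s powr (\<alpha> - 1) = s * e2"
  proof -
    have "s powr (\<alpha> - 1) = s powr ((\<alpha> - 2) + 1)" by simp
    also have "\<dots> = s powr (\<alpha> - 2) * s powr 1" by (rule powr_add)
    finally show ?thesis using s0 by (simp add: e2_def)
  qed
  have e1b: "s * e2 \<le> 1" "0 \<le> s * e2" using srpow_le1[OF y r(2), of "\<alpha> - 1"] a e1 s0 e2b by (auto simp: s_def)
  have LWe: "LW \<alpha> r y = 4*\<alpha>*(\<alpha> - 1)*(norm y)^2 * e2 - 2*\<alpha>*N * (s * e2)"
    unfolding LW_def s_def[symmetric] e2_def[symmetric] e1 using N by simp
  have N1: "N \<ge> 1" using N DIM_positive[where 'a="complex^'n"] by linarith
  have un: "u y \<ge> 0" by (rule u_nonneg)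
  show ?thesis
  proof (cases "norm y \<le> \<rho>")
    case True
    have uM: "u y \<le> Mu" using Mu(2)[OF True] by simp
    have t1: "0 \<le> u y * (4*\<alpha>*(\<alpha> - 1)*(norm y)^2 * e2)" using a un e2b by simp
    have t2: "u y * e2 \<le> Mu * 1" using uM un e2b by (intro mult_mono) auto
    have t3: "u y * (s * e2) \<le> Mu * 1" using uM un e1b by (intro mult_mono) auto
    have "\<alpha> * (u y * e2) \<le> \<alpha> * Mu" using t2 a by (intro mult_left_mono) auto
    moreover have "2*\<alpha>*N * (u y * (s * e2)) \<le> 2*\<alpha>*N * Mu" using t3 a N1 by (intro mult_left_mono) auto
    ultimately have "\<alpha> * (u y * e2) + 2*\<alpha>*N * (u y * (s * e2)) \<le> (2*N + 1) * \<alpha> * Mu"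
      by (simp add: algebra_simps)
    then show ?thesis using True t1 unfolding LWe e2_def[symmetric] s_def[symmetric]
      by (simp add: algebra_simps)
  next
    case False
    have rho0: "\<rho> \<ge> 0" by (simp add: rho)
    have q: "\<rho>^2 = max (1/2) (1 - 1/(2*N))" using N1 by (simp add: rho)
    have "\<rho>^2 < (norm y)^2" using False rho0 by (intro power_strict_mono) auto
    then have y1: "(norm y)^2 > 1/2" and y2: "(norm y)^2 > 1 - 1/(2*N)" using q by auto
    have "r^2 < 1^2" using r by (intro power_strict_mono) auto
    then have "s < 1 - (norm y)^2" unfolding s_def sr_def by simp
    then have "s < 1/(2*N)" using y2 by linarith
    then have sN: "2*N*(s) < 1" using N1 by (simp add: field_simps)
    have "(\<alpha> - 1) * (norm y)^2 \<ge> 1 * (norm y)^2" using a by (intro mult_right_mono) auto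
    then have br: "0 \<le> 4*(\<alpha> - 1)*(norm y)^2 - 2*N*(s) - 1" using y1 sN by linarith
    have "0 \<le> (\<alpha> * u y * e2) * (4*(\<alpha> - 1)*(norm y)^2 - 2*N*(s) - 1)"
      using a un e2b br by (intro mult_nonneg_nonneg) auto
    then have "\<alpha> * u y * e2 \<le> u y * LW \<alpha> r y" unfolding LWe by (simp add: algebra_simps)
    moreover have "0 \<le> (2*N + 1) * \<alpha> * Mu * indicator (cball 0 \<rho>) y" using N1 a Mu by simp
    ultimately show ?thesis by (simp add: e2_def s_def)
  qed
qed

end

context ctx
begin

lemma dir2:
  assumes hyp: "\<forall>z\<in>B. Re (f z * cnj (laplacian f z)) \<ge> 0" and a: "\<alpha> \<ge> 2"
    and fin: "(\<integral>\<^sup>+ y. ennreal (Af \<alpha> y) \<partial>lborel) < \<infinity>"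
  shows "(\<integral>\<^sup>+ y. ennreal (Cf \<alpha> y) \<partial>lborel) < \<infinity>"
proof -
  define N where "N = real DIM(complex^'n)"
  define \<rho> where "\<rho> = sqrt (max (1/2) (1 - 1/(2*N)))"
  have N1: "N \<ge> 1" using N_def DIM_positive[where 'a="complex^'n"] by linarith
  have rho1: "\<rho> < 1" unfolding \<rho>_def using N1 by (auto simp: max_def)
  obtain Mu where Mu: "Mu \<ge> 0" "\<And>y. norm y \<le> \<rho> \<Longrightarrow> \<bar>u y\<bar> \<le> Mu" using u_bounded[OF rho1] by blast
  define c1 where "c1 = (2*N + 1) * \<alpha> * Mu"
  have c1: "c1 \<ge> 0" using N1 a Mu by (simp add: c1_def)
  define K2 where "K2 = c1 * measure lborel (cball (0::complex^'n) \<rho>)"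
  have K2: "K2 \<ge> 0" using c1 by (simp add: K2_def)
  have Lnn: "y \<in> B \<Longrightarrow> L y \<ge> 0" for y using L_nonneg[OF hyp] by simp
  define g where "g k y = indicator (ball 0 (rk k)) y * (\<alpha> * u y * sr (rk k) y powr (\<alpha> - 2))" for k y
  define Df where "Df y = indicator B y * (\<alpha> * u y * (1 - (norm y)^2) powr (\<alpha> - 2))" for y
  have gnn: "g k y \<ge> 0" for k y using a u_nonneg[of y] by (simp add: g_def)
  have intg: "integrable lborel (g k)" for k
  proof -
    define r where "r = rk k"
    have r: "0 < r" "r < 1" using rk_pos rk_lt1 by (auto simp: r_def)
    have sub: "ball (0::complex^'n) r \<subseteq> B" using r by auto
    obtain Mr where Mr: "Mr \<ge> 0" "\<And>y. norm y \<le> r \<Longrightarrow> \<bar>u y\<bar> \<le> Mr" using u_bounded[OF r(2)] by blast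
    have "integrable lborel (\<lambda>y. indicator (ball 0 r) y * (\<alpha> * u y * sr r y powr (\<alpha> - 2)))"
    proof (rule int_ball)
      show "continuous_on (ball 0 r) (\<lambda>y. \<alpha> * u y * sr r y powr (\<alpha> - 2))"
        by (intro continuous_intros cont_srpow continuous_on_subset[OF cont_u sub])
      fix y :: "complex^'n" assume y: "y \<in> ball 0 r"
      have "\<bar>u y * sr r y powr (\<alpha> - 2)\<bar> \<le> Mr * 1"
        unfolding abs_mult using Mr y srpow_le1[OF y r(2), of "\<alpha> - 2"] a by (intro mult_mono) auto
      then show "\<bar>\<alpha> * u y * sr r y powr (\<alpha> - 2)\<bar> \<le> \<alpha> * Mr"
        using a by (simp add: abs_mult mult.assoc mult_left_mono)
    qed
    moreover have "g k = (\<lambda>y. indicator (ball 0 r) y * (\<alpha> * u y * sr r y powr (\<alpha> - 2)))"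
      by (simp add: fun_eq_iff g_def r_def)
    ultimately show ?thesis by simp
  qed
  have bound: "(\<integral>\<^sup>+ y. ennreal (g k y) \<partial>lborel) \<le> (\<integral>\<^sup>+ y. ennreal (Af \<alpha> y) \<partial>lborel) + ennreal K2" for k
  proof -
    define r where "r = rk k"
    have r: "0 < r" "r < 1" using rk_pos rk_lt1 by (auto simp: r_def)
    have sub: "ball (0::complex^'n) r \<subseteq> B" using r by auto
    have intc: "integrable lborel (\<lambda>y. c1 * indicator (cball (0::complex^'n) \<rho>) y)"
      by (intro integrable_mult_right integrable_real_indicator)
         (use emeasure_lborel_cball_finite[of "0::complex^'n" \<rho>] in auto)
    have "integral\<^sup>L lborel (g k) \<le> integral\<^sup>L lborel (\<lambda>y. indicator (ball 0 r) y * (u y * LW \<alpha> r y) + c1 * indicator (cball (0::complex^'n) \<rho>) y)"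
    proof (rule integral_mono[OF intg Bochner_Integration.integrable_add[OF green_eq(1)[OF r a] intc]])
      fix y :: "complex^'n"
      show "g k y \<le> indicator (ball 0 r) y * (u y * LW \<alpha> r y) + c1 * indicator (cball 0 \<rho>) y"
      proof (cases "y \<in> ball 0 r")
        case True
        from key2[OF True r a N_def \<rho>_def Mu] show ?thesis using True by (simp add: g_def r_def c1_def)
      next
        case False then show ?thesis using c1 by (simp add: g_def r_def)
      qed
    qed
    also have "\<dots> = integral\<^sup>L lborel (\<lambda>y. indicator (ball 0 r) y * (W \<alpha> r y * L y)) + K2"
      by (simp add: Bochner_Integration.integral_add[OF green_eq(1)[OF r a] intc] green_eq(2)[OF r a] K2_def)
    finally have le: "integral\<^sup>L lborel (g k) \<le> integral\<^sup>L lborel (\<lambda>y. indicator (ball 0 r) y * (W \<alpha> r y * L y)) + K2" .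
    have WLnn: "0 \<le> indicator (ball 0 r) y * (W \<alpha> r y * L y)" for y
    proof (cases "y \<in> ball 0 r")
      case True then have "L y \<ge> 0" using sub by (intro Lnn) auto
      then show ?thesis by (simp add: W_def)
    qed simp
    have "(\<integral>\<^sup>+ y. ennreal (g k y) \<partial>lborel) = ennreal (integral\<^sup>L lborel (g k))"
      by (rule nn_integral_eq_integral[OF intg]) (use gnn in simp)
    also have "\<dots> \<le> ennreal (integral\<^sup>L lborel (\<lambda>y. indicator (ball 0 r) y * (W \<alpha> r y * L y)) + K2)"
      using le by (rule ennreal_leI)
    also have "\<dots> = ennreal (integral\<^sup>L lborel (\<lambda>y. indicator (ball 0 r) y * (W \<alpha> r y * L y))) + ennreal K2"
      using K2 WLnn by (intro ennreal_plus integral_nonneg) auto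
    also have "ennreal (integral\<^sup>L lborel (\<lambda>y. indicator (ball 0 r) y * (W \<alpha> r y * L y)))
        = (\<integral>\<^sup>+ y. ennreal (indicator (ball 0 r) y * (W \<alpha> r y * L y)) \<partial>lborel)"
      by (rule nn_integral_eq_integral[symmetric, OF int_WL[OF r a]]) (use WLnn in simp)
    also have "(\<integral>\<^sup>+ y. ennreal (indicator (ball 0 r) y * (W \<alpha> r y * L y)) \<partial>lborel) \<le> (\<integral>\<^sup>+ y. ennreal (Af \<alpha> y) \<partial>lborel)"
    proof (intro nn_integral_mono ennreal_leI)
      fix y :: "complex^'n"
      show "indicator (ball 0 r) y * (W \<alpha> r y * L y) \<le> Af \<alpha> y"
      proof (cases "y \<in> ball 0 r")
        case True
        then have yB: "y \<in> B" using sub by auto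
        have "W \<alpha> r y \<le> (1 - (norm y)^2) powr \<alpha>" using r a yB by (intro W_le) auto
        then have "W \<alpha> r y * L y \<le> (1 - (norm y)^2) powr \<alpha> * L y" using Lnn[OF yB] by (rule mult_right_mono)
        then show ?thesis using True yB by (simp add: Af_def)
      next
        case False
        have "Af \<alpha> y \<ge> 0" using Lnn[of y] by (simp add: Af_def indicator_def)
        then show ?thesis using False by simp
      qed
    qed
    finally show ?thesis by (simp add: add_right_mono)
  qed
  have meas_g: "g k \<in> borel_measurable lborel" for k using intg by (rule borel_measurable_integrable)
  have inc: "g k y \<le> g (Suc k) y" for k y
  proof (cases "y \<in> ball 0 (rk k)")
    case True
    then have y2: "y \<in> ball 0 (rk (Suc k))" using rk_mono[of k] by auto
    have s0: "0 < sr (rk k) y" using sr_pos True by simp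
    have "sr (rk k) y \<le> sr (rk (Suc k)) y" using rk_mono rk_pos by (intro sr_mono) (auto simp: less_imp_le)
    then have "sr (rk k) y powr (\<alpha> - 2) \<le> sr (rk (Suc k)) y powr (\<alpha> - 2)" using s0 a by (intro powr_mono2) auto
    then have "\<alpha> * u y * sr (rk k) y powr (\<alpha> - 2) \<le> \<alpha> * u y * sr (rk (Suc k)) y powr (\<alpha> - 2)"
      using a u_nonneg[of y] by (intro mult_left_mono) auto
    then show ?thesis using True y2 by (simp add: g_def)
  next
    case False then show ?thesis using gnn by (simp add: g_def)
  qed
  have lim: "(\<lambda>k. g k y) \<longlonglongrightarrow> Df y" for y
  proof (cases "y \<in> B")
    case True
    then have ny: "norm y < 1" by simp
    have pos: "1 - (norm y)^2 > 0" using normsq_lt1[OF ny] by simp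
    have "(\<lambda>k. sr (rk k) y) \<longlonglongrightarrow> 1^2 - (norm y)^2" unfolding sr_def by (intro tendsto_intros rk_lim)
    then have "(\<lambda>k. \<alpha> * u y * sr (rk k) y powr (\<alpha> - 2)) \<longlonglongrightarrow> \<alpha> * u y * (1^2 - (norm y)^2) powr (\<alpha> - 2)"
      using pos by (intro tendsto_intros tendsto_powr) auto
    moreover have "eventually (\<lambda>k. \<alpha> * u y * sr (rk k) y powr (\<alpha> - 2) = g k y) sequentially"
      using rk_ev[OF ny] by eventually_elim (simp add: g_def)
    ultimately show ?thesis using True by (simp add: Df_def Lim_transform_eventually)
  next
    case False
    then have "g k y = 0" for k using rk_lt1[of k] by (auto simp: g_def)
    then show ?thesis using False by (simp add: Df_def)
  qed
  have Dfin: "(\<integral>\<^sup>+ y. ennreal (Df y) \<partial>lborel) < \<infinity>"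
  proof -
    have "(\<integral>\<^sup>+ y. ennreal (Df y) \<partial>lborel) \<le> (\<integral>\<^sup>+ y. ennreal (Af \<alpha> y) \<partial>lborel) + ennreal K2"
      by (rule mono_lim_bound[OF meas_g inc lim bound])
    also have "\<dots> < \<infinity>" using fin by simp
    finally show ?thesis .
  qed
  have measD: "Df \<in> borel_measurable lborel"
  proof -
    have "continuous_on B (\<lambda>y. \<alpha> * u y * (1 - (norm y)^2) powr (\<alpha> - 2))"
      using normsq_lt1 by (intro continuous_intros continuous_on_powr cont_u) force+
    from meas_ball[OF this] show ?thesis unfolding Df_def .
  qed
  have CD: "Cf \<alpha> y \<le> (1/\<alpha>) * Df y" for y
  proof (cases "y \<in> B")
    case True
    then have ny: "norm y < 1" by simp
    have "norm y * norm y \<le> norm y * 1" using ny by (intro mult_left_mono) auto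
    then have "1 - norm y \<le> 1 - (norm y)^2" by (simp add: power2_eq_square)
    then have "(1 - norm y) powr (\<alpha> - 2) \<le> (1 - (norm y)^2) powr (\<alpha> - 2)" using ny a by (intro powr_mono2) auto
    then have "(1 - norm y) powr (\<alpha> - 2) * u y \<le> (1 - (norm y)^2) powr (\<alpha> - 2) * u y"
      using u_nonneg by (rule mult_right_mono)
    then show ?thesis using True a by (simp add: Cf_def Df_def field_simps)
  next
    case False then show ?thesis by (simp add: Cf_def Df_def)
  qed
  have "(\<integral>\<^sup>+ y. ennreal (Cf \<alpha> y) \<partial>lborel) \<le> (\<integral>\<^sup>+ y. ennreal (1/\<alpha>) * ennreal (Df y) \<partial>lborel)"
  proof (intro nn_integral_mono)
    fix y :: "complex^'n"
    have "ennreal (Cf \<alpha> y) \<le> ennreal ((1/\<alpha>) * Df y)" by (rule ennreal_leI) (rule CD)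
    also have "\<dots> = ennreal (1/\<alpha>) * ennreal (Df y)" using a by (intro ennreal_mult') auto
    finally show "ennreal (Cf \<alpha> y) \<le> ennreal (1/\<alpha>) * ennreal (Df y)" .
  qed
  also have "\<dots> = ennreal (1/\<alpha>) * (\<integral>\<^sup>+ y. ennreal (Df y) \<partial>lborel)"
    by (rule nn_integral_cmult) (use measD in measurable)
  also have "\<dots> < \<infinity>" using Dfin by (simp add: ennreal_mult_less_top)
  finally show ?thesis .
qed

end

lemma dVN_conv:
  fixes \<phi> \<psi> :: "complex^'n \<Rightarrow> real"
  assumes m: "\<psi> \<in> borel_measurable lborel"
    and on: "\<And>z. z \<in> ball 0 1 \<Longrightarrow> \<phi> z = \<psi> z"
    and off: "\<And>z. z \<notin> ball 0 1 \<Longrightarrow> \<psi> z = 0"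
  shows "(\<integral>\<^sup>+ z. ennreal (\<phi> z) \<partial>dVN) < \<infinity> \<longleftrightarrow> (\<integral>\<^sup>+ z. ennreal (\<psi> z) \<partial>lborel) < \<infinity>"
proof -
  let ?B = "ball (0::complex^'n) 1"
  have "(\<integral>\<^sup>+ z. ennreal (\<phi> z) \<partial>dVN) = (\<integral>\<^sup>+ z. ennreal (\<psi> z) \<partial>dVN)"
    unfolding dVN_def
    by (intro nn_integral_cong_AE AE_uniform_measureI) (auto simp: on)
  also have "\<dots> = (\<integral>\<^sup>+ z. ennreal (\<psi> z) * indicator ?B z \<partial>lborel) / emeasure lborel ?B"
    unfolding dVN_def by (rule nn_integral_uniform_measure) (use m in auto)
  also have "(\<integral>\<^sup>+ z. ennreal (\<psi> z) * indicator ?B z \<partial>lborel) = (\<integral>\<^sup>+ z. ennreal (\<psi> z) \<partial>lborel)"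
    by (intro nn_integral_cong) (auto simp: indicator_def off)
  finally have e: "(\<integral>\<^sup>+ z. ennreal (\<phi> z) \<partial>dVN) = (\<integral>\<^sup>+ z. ennreal (\<psi> z) \<partial>lborel) / emeasure lborel ?B" .
  have up: "0 < unit_ball_vol (real DIM(complex^'n))" by (rule unit_ball_vol_pos) simp
  have "emeasure lborel ?B = ennreal (unit_ball_vol (real DIM(complex^'n)) * 1 ^ DIM(complex^'n))"
    by (rule emeasure_ball) simp
  then have eb: "emeasure lborel ?B = ennreal (unit_ball_vol (real DIM(complex^'n)))"
    by (simp only: power_one mult_1_right)
  have c0: "emeasure lborel ?B \<noteq> 0"
    unfolding eb using up by (simp only: ennreal_eq_0_iff not_le)
  have ct: "emeasure lborel ?B \<noteq> top" using emeasure_lborel_ball_finite[of "0::complex^'n" 1] by simp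
  show ?thesis unfolding e using c0 ct by (simp add: less_top[symmetric] ennreal_divide_eq_top_iff)
qed

theorem theorem1p5:
  fixes f :: "complex^'n \<Rightarrow> complex" and p \<alpha> :: real
  assumes "C2_on (ball 0 1) f"
    and "\<forall>z\<in>ball 0 1. Re (f z * cnj (laplacian f z)) \<ge> 0"
    and "p \<ge> 2" and "\<alpha> \<ge> 2"
  shows "(\<integral>\<^sup>+ z. ennreal ((1 - (norm z)\<^sup>2) powr \<alpha> * laplacian (\<lambda>w. norm (f w) powr p) z) \<partial>dVN) < \<infinity>
         \<longleftrightarrow> f \<in> b_space (\<alpha> - 2) p"
proof -
  interpret ctx f p by unfold_locales (use assms in auto)
  have a: "\<alpha> \<ge> 2" and hyp: "\<forall>z\<in>B. Re (f z * cnj (laplacian f z)) \<ge> 0" using assms by auto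
  have i: "(\<integral>\<^sup>+ z. ennreal ((1 - (norm z)\<^sup>2) powr \<alpha> * laplacian (\<lambda>w. norm (f w) powr p) z) \<partial>dVN) < \<infinity>
      \<longleftrightarrow> (\<integral>\<^sup>+ z. ennreal (Af \<alpha> z) \<partial>lborel) < \<infinity>"
    by (rule dVN_conv[OF meas_Af]) (use a in \<open>auto simp: Af_def lap_u\<close>)
  have ii: "f \<in> b_space (\<alpha> - 2) p \<longleftrightarrow> (\<integral>\<^sup>+ z. ennreal (Cf \<alpha> z) \<partial>lborel) < \<infinity>"
  proof -
    have "(\<integral>\<^sup>+ z. ennreal ((1 - norm z) powr (\<alpha> - 2) * norm (f z) powr p) \<partial>dVN) < \<infinity>
        \<longleftrightarrow> (\<integral>\<^sup>+ z. ennreal (Cf \<alpha> z) \<partial>lborel) < \<infinity>"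
      by (rule dVN_conv[OF meas_Cf]) (auto simp: Cf_def u_def)
    then show ?thesis using cont_f by (simp add: b_space_def)
  qed
  show ?thesis unfolding i ii using dir1[OF hyp a] dir2[OF hyp a] by blast
qed


end
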